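(* For DCG models: (a) if a DCG model $(G^*,\mathbb{P})$ satisfies the causal faithfulness condition (CFC), then it satisfies the weak SMR assumption; (b) there exists a DCG model $(G,\mathbb{P})$ satisfying the CFC that does not satisfy the identifiable SMR assumption; (c) if a DCG model $(G^*,\mathbb{P})$ satisfies the identifiable SMR assumption, then it satisfies the P-minimality assumption; (d) there exists a DCG model $(G,\mathbb{P})$ satisfying the weak SMR assumption that does not satisfy the P-minimality assumption.
   Context: A DCG is a directed graph $G=(V,E)$ on $V=\{1,\dots,p\}$, directed cycles allowed. A DCG model is a pair $(G,\mathbb{P})$ with $\mathbb{P}$ a probability distribution of a random vector $(X_1,\dots,X_p)$. Descendant/ancestor refer to directed paths. $j,k$ are really adjacent if $j\to k$ or $k\to j$, virtually adjacent if they have a common child $\ell$ that is an ancestor of $j$ or $k$; the skeleton $S(G)$ is the set of really or virtually adjacent pairs, and $|S(G)|$ its cardinality. d-connection: for $S\subset V\setminus\{j,k\}$, $j$ is d-connected to $k$ given $S$ if some undirected path between them has every interior vertex in $S$ a collider ($\to b\leftarrow$ on the path) and every collider with itself or a descendant in $S$; otherwise d-separated. $D_{sep}(G)$ is the set of triples $(j,k,S)$ with $j$ d-separated from $k$ given $S$. $(G,\mathbb{P})$ satisfies the causal Markov condition (CMC) if whenever $j$ is d-separated from $k$ given $S$ in $G$, $X_j\perp X_k\mid X_S$ under $\mathbb{P}$. Two DCGs are Markov equivalent if every distribution satisfying the CMC with respect to one satisfies it with respect to the other; $\mathcal{M}(G)$ is the Markov equivalence class of $G$. CFC: for all $j,k$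 and $S\subset V\setminus\{j,k\}$, $j$ is d-separated from $k$ given $S$ in $G^*$ iff $X_j\perp X_k\mid X_S$ under $\mathbb{P}$. Identifiable SMR: $(G^*,\mathbb{P})$ satisfies the CMC and $|S(G^* )|<|S(G)|$ for every DCG $G$ with $(G,\mathbb{P})$ satisfying the CMC and $G\notin\mathcal{M}(G^* )$. Weak SMR: same with $\le$ instead of $<$. P-minimality: $(G^*,\mathbb{P})$ satisfies the CMC and there is no DCG $G$ with $(G,\mathbb{P})$ satisfying the CMC, $G\notin\mathcal{M}(G^* )$, and $D_{sep}(G^* )\subsetneq D_{sep}(G)$. *)

theory Defs
  imports "HOL-Probability.Probability"
begin

(* Vertex set V = {1..p}.  A DCG on V is a set of directed edges (j,k) meaning j -> k,
   no self-loops. *)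
definition dcg :: "nat \<Rightarrow> (nat \<times> nat) set \<Rightarrow> bool" where
  "dcg p E \<longleftrightarrow> E \<subseteq> {1..p} \<times> {1..p} \<and> (\<forall>j. (j, j) \<notin> E)"

definition anc :: "(nat \<times> nat) set \<Rightarrow> nat \<Rightarrow> nat \<Rightarrow> bool" where
  "anc E a b \<longleftrightarrow> (a, b) \<in> E\<^sup>*"

definition really_adj :: "(nat \<times> nat) set \<Rightarrow> nat \<Rightarrow> nat \<Rightarrow> bool" where
  "really_adj E j k \<longleftrightarrow> (j, k) \<in> E \<or> (k, j) \<in> E"

definition virtually_adj :: "(nat \<times> nat) set \<Rightarrow> nat \<Rightarrow> nat \<Rightarrow> bool" where
  "virtually_adj E j k \<longleftrightarrow>
     (\<exists>l. (j, l) \<in> E \<and> (k, l) \<in> E \<and> (anc E l j \<or> anc E l k))"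

(* skeleton: unordered pairs {j,k}, represented as (j,k) with j < k *)
definition skeleton :: "(nat \<times> nat) set \<Rightarrow> (nat \<times> nat) set" where
  "skeleton E = {(j, k). j < k \<and> (really_adj E j k \<or> virtually_adj E j k)}"

(* An undirected path between j and k: a list of distinct vertices vs with vs!0 = j,
   last vs = k, together with a list ds of edge orientations: ds!i = True means the
   edge vs!i -> vs!(i+1) is used, ds!i = False means vs!(i+1) -> vs!i is used.
   (Recording the edge used matters when both j->k and k->j are present.) *)
definition is_path :: "(nat \<times> nat) set \<Rightarrow> nat \<Rightarrow> nat \<Rightarrow> nat list \<Rightarrow> bool list \<Rightarrow> bool" where
  "is_path E j k vs ds \<longleftrightarrow>
     vs \<noteq> [] \<and> hd vs = j \<and> last vs = k \<and> distinct vs \<and>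
     length ds + 1 = length vs \<and>
     (\<forall>i < length ds. (if ds ! i then (vs ! i, vs ! Suc i) \<in> E
                                 else (vs ! Suc i, vs ! i) \<in> E))"

(* the interior vertex vs!i (0 < i < length vs - 1) is a collider: -> vs!i <- *)
definition collider_at :: "bool list \<Rightarrow> nat \<Rightarrow> bool" where
  "collider_at ds i \<longleftrightarrow> ds ! (i - 1) \<and> \<not> ds ! i"

definition d_connected :: "(nat \<times> nat) set \<Rightarrow> nat \<Rightarrow> nat \<Rightarrow> nat set \<Rightarrow> bool" where
  "d_connected E j k S \<longleftrightarrow>
     (\<exists>vs ds. is_path E j k vs ds \<and>
        (\<forall>i. 0 < i \<and> i < length ds \<longrightarrow>
           (vs ! i \<in> S \<longrightarrow> collider_at ds i) \<and>
           (collider_at ds i \<longrightarrow> (\<exists>s\<in>S. anc E (vs ! i) s))))"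

definition d_separated :: "(nat \<times> nat) set \<Rightarrow> nat \<Rightarrow> nat \<Rightarrow> nat set \<Rightarrow> bool" where
  "d_separated E j k S \<longleftrightarrow> \<not> d_connected E j k S"

definition triples :: "nat \<Rightarrow> (nat \<times> nat \<times> nat set) set" where
  "triples p = {(j, k, S). j \<in> {1..p} \<and> k \<in> {1..p} \<and> j \<noteq> k \<and> S \<subseteq> {1..p} - {j, k}}"

definition Dsep :: "nat \<Rightarrow> (nat \<times> nat) set \<Rightarrow> (nat \<times> nat \<times> nat set) set" where
  "Dsep p E = {(j, k, S) \<in> triples p. d_separated E j k S}"

(* A probability distribution of a real random vector (X_1,...,X_p): a probability
   measure on the product space of R^{1..p}; X_j is the j-th coordinate. *)
definition distribution :: "nat \<Rightarrow> (nat \<Rightarrow> real) measure \<Rightarrow> bool" where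
  "distribution p P \<longleftrightarrow> prob_space P \<and> sets P = sets (Pi\<^sub>M {1..p} (\<lambda>_. borel))"

definition sigma_of :: "(nat \<Rightarrow> real) measure \<Rightarrow> nat set \<Rightarrow> (nat \<Rightarrow> real) measure" where
  "sigma_of P S = vimage_algebra (space P) (\<lambda>x. restrict x S) (Pi\<^sub>M S (\<lambda>_. borel))"

definition cond_indep :: "(nat \<Rightarrow> real) measure \<Rightarrow> nat \<Rightarrow> nat \<Rightarrow> nat set \<Rightarrow> bool" where
  "cond_indep P j k S \<longleftrightarrow>
     (\<forall>A \<in> sets borel. \<forall>B \<in> sets borel.
        AE x in P. real_cond_exp P (sigma_of P S)
                      (\<lambda>y. indicator A (y j) * indicator B (y k)) x
                 = real_cond_exp P (sigma_of P S) (\<lambda>y. indicator A (y j)) x *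
                   real_cond_exp P (sigma_of P S) (\<lambda>y. indicator B (y k)) x)"

definition CMC :: "nat \<Rightarrow> (nat \<times> nat) set \<Rightarrow> (nat \<Rightarrow> real) measure \<Rightarrow> bool" where
  "CMC p E P \<longleftrightarrow> (\<forall>(j, k, S) \<in> Dsep p E. cond_indep P j k S)"

definition markov_equiv :: "nat \<Rightarrow> (nat \<times> nat) set \<Rightarrow> (nat \<times> nat) set \<Rightarrow> bool" where
  "markov_equiv p E E' \<longleftrightarrow> (\<forall>P. distribution p P \<longrightarrow> (CMC p E P \<longleftrightarrow> CMC p E' P))"

definition CFC :: "nat \<Rightarrow> (nat \<times> nat) set \<Rightarrow> (nat \<Rightarrow> real) measure \<Rightarrow> bool" where
  "CFC p E P \<longleftrightarrow> (\<forall>(j, k, S) \<in> triples p. d_separated E j k S \<longleftrightarrow> cond_indep P j k S)"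

definition identifiable_SMR :: "nat \<Rightarrow> (nat \<times> nat) set \<Rightarrow> (nat \<Rightarrow> real) measure \<Rightarrow> bool" where
  "identifiable_SMR p E P \<longleftrightarrow> CMC p E P \<and>
     (\<forall>G. dcg p G \<and> CMC p G P \<and> \<not> markov_equiv p G E \<longrightarrow>
          card (skeleton E) < card (skeleton G))"

definition weak_SMR :: "nat \<Rightarrow> (nat \<times> nat) set \<Rightarrow> (nat \<Rightarrow> real) measure \<Rightarrow> bool" where
  "weak_SMR p E P \<longleftrightarrow> CMC p E P \<and>
     (\<forall>G. dcg p G \<and> CMC p G P \<and> \<not> markov_equiv p G E \<longrightarrow>
          card (skeleton E) \<le> card (skeleton G))"

definition P_minimal :: "nat \<Rightarrow> (nat \<times> nat) set \<Rightarrow> (nat \<Rightarrow> real) measure \<Rightarrow> bool" where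
  "P_minimal p E P \<longleftrightarrow> CMC p E P \<and>
     \<not> (\<exists>G. dcg p G \<and> CMC p G P \<and> \<not> markov_equiv p G E \<and> Dsep p E \<subset> Dsep p G)"

end

theory Submission
  imports Defs
begin


lemma is_path_len: "is_path E j k vs ds \<Longrightarrow> length vs = Suc (length ds)"
  unfolding is_path_def by simp

lemma is_path_last: "is_path E j k vs ds \<Longrightarrow> vs ! length ds = k"
  unfolding is_path_def by (metis add_diff_cancel_right' last_conv_nth)

lemma is_path_hd: "is_path E j k vs ds \<Longrightarrow> vs ! 0 = j"
  unfolding is_path_def by (metis hd_conv_nth)

lemma d_connected_sym:
  assumes "d_connected E j k S" shows "d_connected E k j S"
proof -
  obtain vs ds where P: "is_path E j k vs ds" and C: "\<forall>i. 0 < i \<and> i < length ds \<longrightarrow>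
           (vs ! i \<in> S \<longrightarrow> collider_at ds i) \<and>
           (collider_at ds i \<longrightarrow> (\<exists>s\<in>S. anc E (vs ! i) s))"
    using assms unfolding d_connected_def by blast
  define n where "n = length ds"
  have lv: "length vs = Suc n" using is_path_len[OF P] n_def by simp
  define vs' where "vs' = rev vs"
  define ds' where "ds' = rev (map Not ds)"
  have nth_vs': "vs' ! i = vs ! (n - i)" if "i \<le> n" for i
    using that lv unfolding vs'_def by (simp add: rev_nth)
  have nth_ds': "ds' ! i = (\<not> ds ! (n - 1 - i))" if "i < n" for i
    using that unfolding ds'_def n_def by (simp add: rev_nth)
  have col: "collider_at ds' i = collider_at ds (n - i)" if "0 < i" "i < n" for i
  proof -
    have "ds' ! (i - 1) = (\<not> ds ! (n - i))" using nth_ds'[of "i - 1"] that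
      by (simp add: Suc_diff_Suc)
    moreover have "ds' ! i = (\<not> ds ! (n - i - 1))" using nth_ds'[of i] that by simp
    ultimately show ?thesis unfolding collider_at_def using that
      by (metis (no_types, lifting) One_nat_def diff_diff_left plus_1_eq_Suc)
  qed
  have P': "is_path E k j vs' ds'"
    unfolding is_path_def
  proof (intro conjI allI impI)
    show "vs' \<noteq> []" using lv vs'_def by auto
    show "hd vs' = k" using P unfolding vs'_def is_path_def by (simp add: hd_rev)
    show "last vs' = j" using P unfolding vs'_def is_path_def by (simp add: last_rev)
    show "distinct vs'" using P unfolding vs'_def is_path_def by simp
    show "length ds' + 1 = length vs'" using lv unfolding vs'_def ds'_def n_def by simp
    fix i assume i: "i < length ds'"
    hence i': "i < n" unfolding ds'_def n_def by simp
    have e: "if ds ! (n - 1 - i) then (vs ! (n - 1 - i), vs ! Suc (n - 1 - i)) \<in> E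
             else (vs ! Suc (n - 1 - i), vs ! (n - 1 - i)) \<in> E"
      using P i' unfolding is_path_def n_def by auto
    have "Suc (n - 1 - i) = n - i" using i' by simp
    moreover have "vs' ! i = vs ! (n - i)" using nth_vs' i' by simp
    moreover have "vs' ! Suc i = vs ! (n - 1 - i)" using nth_vs'[of "Suc i"] i' by simp
    ultimately show "if ds' ! i then (vs' ! i, vs' ! Suc i) \<in> E else (vs' ! Suc i, vs' ! i) \<in> E"
      using e nth_ds'[OF i'] by (auto split: if_splits)
  qed
  show ?thesis unfolding d_connected_def
  proof (rule exI, rule exI, rule conjI)
    show "is_path E k j vs' ds'" by (rule P')
  next
    show "\<forall>i. 0 < i \<and> i < length ds' \<longrightarrow> (vs' ! i \<in> S \<longrightarrow> collider_at ds' i) \<and> (collider_at ds' i \<longrightarrow> (\<exists>s\<in>S. anc E (vs' ! i) s))"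
    proof (intro allI impI)
    fix i assume i: "0 < i \<and> i < length ds'"
    hence i': "0 < i" "i < n" unfolding ds'_def n_def by auto
    have "0 < n - i \<and> n - i < length ds" using i' n_def by auto
    hence "(vs ! (n - i) \<in> S \<longrightarrow> collider_at ds (n - i)) \<and>
           (collider_at ds (n - i) \<longrightarrow> (\<exists>s\<in>S. anc E (vs ! (n - i)) s))" using C by blast
    thus "(vs' ! i \<in> S \<longrightarrow> collider_at ds' i) \<and> (collider_at ds' i \<longrightarrow> (\<exists>s\<in>S. anc E (vs' ! i) s))"
      using col[OF i'] nth_vs'[of i] i' by simp
  qed
  qed
qed

lemma d_separated_sym: "d_separated E j k S \<Longrightarrow> d_separated E k j S"
  unfolding d_separated_def using d_connected_sym by blast

definition dpath :: "(nat \<times> nat) set \<Rightarrow> nat list \<Rightarrow> bool" where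
  "dpath E ws \<longleftrightarrow> ws \<noteq> [] \<and> distinct ws \<and> (\<forall>i. Suc i < length ws \<longrightarrow> (ws ! i, ws ! Suc i) \<in> E)"

lemma dpath_take: "dpath E ws \<Longrightarrow> 0 < n \<Longrightarrow> dpath E (take n ws)"
  unfolding dpath_def by auto

lemma rtrancl_dpath:
  assumes "(a, b) \<in> E\<^sup>*"
  shows "\<exists>ws. dpath E ws \<and> hd ws = a \<and> last ws = b"
  using assms
proof (induction rule: rtrancl_induct)
  case base
  show ?case by (rule exI[of _ "[a]"]) (simp add: dpath_def)
next
  case (step b c)
  then obtain ws where ws: "dpath E ws" "hd ws = a" "last ws = b" by blast
  show ?case
  proof (cases "c \<in> set ws")
    case True
    obtain i where i: "i < length ws" "ws ! i = c" using True by (auto simp: in_set_conv_nth)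
    have "dpath E (take (Suc i) ws)" using ws(1) by (rule dpath_take) simp
    moreover have "hd (take (Suc i) ws) = a" using ws i by (cases ws) auto
    moreover have "last (take (Suc i) ws) = c" using i by (simp add: take_Suc_conv_app_nth)
    ultimately show ?thesis by blast
  next
    case False
    have "dpath E (ws @ [c])"
      using ws False step(2) unfolding dpath_def
      by (auto simp: nth_append last_conv_nth less_Suc_eq) (metis diff_Suc_Suc minus_nat.diff_0)
    moreover have "hd (ws @ [c]) = a" using ws by (simp add: dpath_def)
    ultimately show ?thesis by (intro exI[of _ "ws @ [c]"]) simp
  qed
qed

lemma dpath_reach:
  assumes "dpath E ws" "i < length ws" shows "(hd ws, ws ! i) \<in> E\<^sup>*"
  using assms(2)
proof (induction i)
  case 0 thus ?case using assms(1) by (simp add: dpath_def hd_conv_nth)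
next
  case (Suc i)
  hence "(ws ! i, ws ! Suc i) \<in> E" using assms(1) by (simp add: dpath_def)
  with Suc show ?case by (meson Suc_lessD rtrancl.rtrancl_into_rtrancl)
qed

lemma virt_conn:
  assumes ul: "(u, l) \<in> E" and ws: "dpath E ws" "hd ws = l" "last ws = t"
    and u: "u \<notin> set ws" and nS: "\<forall>s\<in>S. \<not> anc E l s"
  shows "d_connected E u t S"
  unfolding d_connected_def
proof (rule exI[where x="u # ws"], rule exI[where x="replicate (length ws) True"], rule conjI)
  let ?vs = "u # ws" and ?ds = "replicate (length ws) True"
  have wsne: "ws \<noteq> []" using ws by (simp add: dpath_def)
  show "is_path E u t ?vs ?ds"
    unfolding is_path_def
  proof (intro conjI allI impI)
    show "distinct ?vs" using u ws by (simp add: dpath_def)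
    show "last ?vs = t" using wsne ws by simp
    fix i assume i: "i < length ?ds"
    show "if ?ds ! i then (?vs ! i, ?vs ! Suc i) \<in> E else (?vs ! Suc i, ?vs ! i) \<in> E"
    proof (cases i)
      case 0 thus ?thesis using ul ws wsne i by (simp add: hd_conv_nth)
    next
      case (Suc i')
      thus ?thesis using ws(1) i by (simp add: dpath_def)
    qed
  qed simp_all
  show "\<forall>i. 0 < i \<and> i < length ?ds \<longrightarrow> (?vs ! i \<in> S \<longrightarrow> collider_at ?ds i) \<and> (collider_at ?ds i \<longrightarrow> (\<exists>s\<in>S. anc E (?vs ! i) s))"
  proof (intro allI impI)
  fix i assume i: "0 < i \<and> i < length ?ds"
  then obtain i' where i': "i = Suc i'" "i' < length ws" by (cases i) auto
  have "(l, ws ! i') \<in> E\<^sup>*" using dpath_reach[OF ws(1) i'(2)] ws(2) by simp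
  hence "?vs ! i \<notin> S" using nS i' by (auto simp: anc_def)
  moreover have "\<not> collider_at ?ds i" using i by (simp add: collider_at_def)
  ultimately show "(?vs ! i \<in> S \<longrightarrow> collider_at ?ds i) \<and> (collider_at ?ds i \<longrightarrow> (\<exists>s\<in>S. anc E (?vs ! i) s))"
    by simp
  qed
qed

lemma virt_main:
  assumes ul: "(u, l) \<in> E" and tl: "(t, l) \<in> E" and ut: "u \<noteq> t" and lt: "anc E l t"
    and nS: "\<forall>s\<in>S. \<not> anc E l s"
  shows "d_connected E u t S \<or> d_connected E t u S"
proof -
  obtain ws where ws: "dpath E ws" "hd ws = l" "last ws = t"
    using rtrancl_dpath lt unfolding anc_def by blast
  show ?thesis
  proof (cases "u \<in> set ws")
    case False thus ?thesis using virt_conn[OF ul ws False nS] by blast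
  next
    case True
    obtain i where i: "i < length ws" "ws ! i = u" using True by (auto simp: in_set_conv_nth)
    have wsne: "ws \<noteq> []" and dws: "distinct ws" using ws by (auto simp: dpath_def)
    have tl': "ws ! (length ws - 1) = t" using ws wsne by (simp add: last_conv_nth)
    have "i \<noteq> length ws - 1" using i tl' ut by auto
    hence ilt: "Suc i < length ws" using i by linarith
    let ?ws = "take (Suc i) ws"
    have "dpath E ?ws" using ws(1) by (rule dpath_take) simp
    moreover have "hd ?ws = l" using ws i by (cases ws) auto
    moreover have "last ?ws = u" using i by (simp add: take_Suc_conv_app_nth)
    moreover have "t \<notin> set ?ws"
    proof
      assume "t \<in> set ?ws"
      then obtain m where m: "m < Suc i" "ws ! m = t" using ilt by (auto simp: in_set_conv_nth)
      have "m = length ws - 1" using nth_eq_iff_index_eq[OF dws, of m "length ws - 1"] m tl' ilt by auto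
      thus False using m ilt by simp
    qed
    ultimately have "d_connected E t u S" using virt_conn[OF tl] nS by blast
    thus ?thesis by blast
  qed
qed

lemma skel_conn:
  assumes E: "dcg p E" and jk: "(j, k) \<in> skeleton E"
  shows "d_connected E j k S"
proof -
  have jk': "j < k" "really_adj E j k \<or> virtually_adj E j k" using jk by (auto simp: skeleton_def)
  show ?thesis
  proof (cases "really_adj E j k")
    case True
    show ?thesis unfolding d_connected_def
    proof (rule exI[where x="[j, k]"], rule exI[where x="[(j, k) \<in> E]"], rule conjI)
      show "is_path E j k [j, k] [(j, k) \<in> E]"
        using True jk' by (auto simp: is_path_def really_adj_def)
    qed auto
  next
    case False
    then obtain l where l: "(j, l) \<in> E" "(k, l) \<in> E" "anc E l j \<or> anc E l k"
      using jk' by (auto simp: virtually_adj_def)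
    have lj: "l \<noteq> j" "l \<noteq> k" using l E by (auto simp: dcg_def)
    show ?thesis
    proof (cases "\<exists>s\<in>S. anc E l s")
      case True
      show ?thesis unfolding d_connected_def
      proof (rule exI[where x="[j, l, k]"], rule exI[where x="[True, False]"], rule conjI)
        show "is_path E j k [j, l, k] [True, False]"
          using l lj jk' by (auto simp: is_path_def nth_Cons split: nat.splits)
        show "\<forall>i. 0 < i \<and> i < length [True, False] \<longrightarrow> ([j, l, k] ! i \<in> S \<longrightarrow> collider_at [True, False] i) \<and>
            (collider_at [True, False] i \<longrightarrow> (\<exists>s\<in>S. anc E ([j, l, k] ! i) s))"
        proof (intro allI impI)
        fix i assume "0 < i \<and> i < length [True, False]"
        hence "i = 1" by auto
        thus "([j, l, k] ! i \<in> S \<longrightarrow> collider_at [True, False] i) \<and>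
            (collider_at [True, False] i \<longrightarrow> (\<exists>s\<in>S. anc E ([j, l, k] ! i) s))"
          using True by (simp add: collider_at_def)
        qed
      qed
    next
      case False
      hence nS: "\<forall>s\<in>S. \<not> anc E l s" by blast
      have "d_connected E k j S \<or> d_connected E j k S \<or> d_connected E j k S \<or> d_connected E k j S"
        using l(3) virt_main[OF l(2) l(1) _ _ nS] virt_main[OF l(1) l(2) _ _ nS] jk' by force
      thus ?thesis using d_connected_sym by blast
    qed
  qed
qed

lemma anc_trans: "anc E a b \<Longrightarrow> anc E b c \<Longrightarrow> anc E a c"
  unfolding anc_def by simp

lemma anc_edge: "(a, b) \<in> E \<Longrightarrow> anc E b c \<Longrightarrow> anc E a c"
  unfolding anc_def by (meson converse_rtrancl_into_rtrancl)

lemma sep_nonadj: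
  assumes jk: "j \<noteq> k" and nr: "\<not> really_adj E j k" and nv: "\<not> virtually_adj E j k"
  shows "d_separated E j k ({v. anc E v j \<or> anc E v k} - {j, k})"
proof -
  define A0 where "A0 = {v. anc E v j \<or> anc E v k}"
  define S0 where "S0 = A0 - {j, k}"
  have A0e: "a \<in> A0" if "(a, b) \<in> E" "b \<in> A0" for a b
    using that anc_edge unfolding A0_def by blast
  have jA: "j \<in> A0" and kA: "k \<in> A0" by (auto simp: A0_def anc_def)
  show ?thesis unfolding d_separated_def S0_def[symmetric, unfolded A0_def]
  proof
    assume "d_connected E j k S0"
    then obtain vs ds where P: "is_path E j k vs ds" and C: "\<And>i. 0 < i \<Longrightarrow> i < length ds \<Longrightarrow>
           (vs ! i \<in> S0 \<longrightarrow> collider_at ds i) \<and>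
           (collider_at ds i \<longrightarrow> (\<exists>s\<in>S0. anc E (vs ! i) s))"
      unfolding d_connected_def by blast
    define n where "n = length ds"
    have lv: "length vs = Suc n" using is_path_len[OF P] n_def by simp
    have v0: "vs ! 0 = j" using is_path_hd[OF P] .
    have vn: "vs ! n = k" using is_path_last[OF P] n_def by simp
    have dv: "distinct vs" using P by (simp add: is_path_def)
    have edge: "\<And>i. i < n \<Longrightarrow> (if ds ! i then (vs ! i, vs ! Suc i) \<in> E else (vs ! Suc i, vs ! i) \<in> E)"
      using P n_def by (simp add: is_path_def)
    have colA: "vs ! i \<in> A0" if "0 < i" "i < n" "collider_at ds i" for i
    proof -
      have "collider_at ds i \<longrightarrow> (\<exists>s\<in>S0. anc E (vs ! i) s)" using C[of i] that n_def by simp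
      then obtain s where "s \<in> S0" "anc E (vs ! i) s" using \<open>collider_at ds i\<close> by blast
      thus ?thesis unfolding S0_def A0_def using anc_trans by blast
    qed
    have Cc: "i < n \<longrightarrow> ds ! i \<longrightarrow> vs ! Suc i \<in> A0" if "i \<le> n" for i
      using that
    proof (induction rule: inc_induct)
      case base thus ?case by simp
    next
      case (step m)
      show ?case
      proof (intro impI)
        assume dm: "ds ! m"
        show "vs ! Suc m \<in> A0"
        proof (cases "Suc m = n")
          case True thus ?thesis using vn kA by simp
        next
          case False
          hence sm: "Suc m < n" using step by simp
          show ?thesis
          proof (cases "collider_at ds (Suc m)")
            case True thus ?thesis using colA sm by simp
          next
            case False
            hence "ds ! Suc m" using dm by (simp add: collider_at_def)
            hence "vs ! Suc (Suc m) \<in> A0" "(vs ! Suc m, vs ! Suc (Suc m)) \<in> E"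
              using step.IH sm edge[OF sm] by auto
            thus ?thesis using A0e by blast
          qed
        qed
      qed
    qed
    have Dd: "i < n \<longrightarrow> \<not> ds ! i \<longrightarrow> vs ! i \<in> A0" for i
    proof (induction i)
      case 0 thus ?case using v0 jA by simp
    next
      case (Suc i)
      show ?case
      proof (intro impI)
        assume si: "Suc i < n" and nd: "\<not> ds ! Suc i"
        show "vs ! Suc i \<in> A0"
        proof (cases "collider_at ds (Suc i)")
          case True thus ?thesis using colA si by simp
        next
          case False
          hence "\<not> ds ! i" using nd by (simp add: collider_at_def)
          hence "vs ! i \<in> A0" "(vs ! Suc i, vs ! i) \<in> E" using Suc si edge[of i] by auto
          thus ?thesis using A0e by blast
        qed
      qed
    qed
    have intA: "vs ! i \<in> A0" if "i < n" for i
    proof (cases "ds ! i")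
      case True
      hence "vs ! Suc i \<in> A0" "(vs ! i, vs ! Suc i) \<in> E" using Cc[of i] that edge[OF that] by auto
      thus ?thesis using A0e by blast
    next
      case False thus ?thesis using Dd that by blast
    qed
    have intC: "collider_at ds i" if "0 < i" "i < n" for i
    proof -
      have "vs ! i \<noteq> j" using v0 dv that lv nth_eq_iff_index_eq[OF dv, of i 0] by auto
      moreover have "vs ! i \<noteq> k" using vn dv that lv nth_eq_iff_index_eq[OF dv, of i n] by auto
      ultimately have "vs ! i \<in> S0" using intA that unfolding S0_def by auto
      thus ?thesis using C that n_def by blast
    qed
    have "n \<noteq> 0"
    proof
      assume "n = 0" thus False using v0 vn jk by simp
    qed
    moreover have "n \<noteq> 1"
    proof
      assume "n = 1"
      thus False using edge[of 0] v0 vn nr by (auto simp: really_adj_def split: if_splits)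
    qed
    moreover have "n \<noteq> 2"
    proof
      assume n2: "n = 2"
      have c1: "collider_at ds 1" using intC n2 by simp
      hence "(j, vs ! 1) \<in> E" "(k, vs ! 1) \<in> E" using edge[of 0] edge[of 1] v0 vn n2
        by (auto simp: collider_at_def numeral_2_eq_2)
      moreover have "vs ! 1 \<in> A0" using colA c1 n2 by simp
      ultimately show False using nv unfolding virtually_adj_def A0_def by blast
    qed
    moreover have "\<not> n \<ge> 3"
    proof
      assume "n \<ge> 3"
      hence "collider_at ds 1" "collider_at ds 2" using intC by auto
      thus False by (simp add: collider_at_def)
    qed
    ultimately show False by linarith
  qed
qed

lemma skel_fin: "dcg p E \<Longrightarrow> skeleton E \<subseteq> {1..p} \<times> {1..p}"
  unfolding skeleton_def dcg_def really_adj_def virtually_adj_def by blast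

lemma skel_sub:
  assumes E: "dcg p E" and G: "dcg p G" and D: "Dsep p G \<subseteq> Dsep p E"
  shows "skeleton E \<subseteq> skeleton G"
proof
  fix x assume x: "x \<in> skeleton E"
  obtain j k where xjk: "x = (j, k)" by (cases x)
  have jk: "j < k" using x xjk by (simp add: skeleton_def)
  have jkV: "j \<in> {1..p}" "k \<in> {1..p}" using skel_fin[OF E] x xjk by auto
  show "x \<in> skeleton G"
  proof (rule ccontr)
    assume "x \<notin> skeleton G"
    hence nr: "\<not> really_adj G j k" and nv: "\<not> virtually_adj G j k" using jk xjk by (auto simp: skeleton_def)
    define S0 where "S0 = {v. anc G v j \<or> anc G v k} - {j, k}"
    have sep: "d_separated G j k S0" unfolding S0_def using sep_nonadj[OF _ nr nv] jk by simp
    have "S0 \<subseteq> {1..p} - {j, k}"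
    proof
      fix v assume v: "v \<in> S0"
      hence "(v, j) \<in> G\<^sup>* \<or> (v, k) \<in> G\<^sup>*" "v \<noteq> j" "v \<noteq> k" by (auto simp: S0_def anc_def)
      hence "\<exists>w. (v, w) \<in> G" by (meson converse_rtranclE)
      thus "v \<in> {1..p} - {j, k}" using G v by (auto simp: dcg_def S0_def)
    qed
    hence "(j, k, S0) \<in> Dsep p G" using sep jkV jk by (auto simp: Dsep_def triples_def)
    hence "d_separated E j k S0" using D by (auto simp: Dsep_def)
    thus False using skel_conn[OF E x[unfolded xjk]] by (simp add: d_separated_def)
  qed
qed

lemma skel_card:
  assumes E: "dcg p E" and G: "dcg p G" and D: "Dsep p G \<subseteq> Dsep p E"
  shows "card (skeleton E) \<le> card (skeleton G)"
  using skel_sub[OF assms] skel_fin[OF G] by (intro card_mono) (auto intro: finite_subset)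



locale dd =
  fixes V :: "nat set" and N :: nat and vec :: "nat \<Rightarrow> nat \<Rightarrow> real"
  assumes N0: "0 < N" and vec_sp: "\<And>m. vec m \<in> space (Pi\<^sub>M V (\<lambda>_. (borel :: real measure)))"
begin

abbreviation "MM \<equiv> Pi\<^sub>M V (\<lambda>_. (borel :: real measure))"
abbreviation "Q \<equiv> measure_pmf (pmf_of_set {..<N})"

definition PP :: "(nat \<Rightarrow> real) measure" where
  "PP = distr Q MM vec"

lemma ne: "{..<N} \<noteq> {}" using N0 by auto

lemma vec_meas[measurable]: "vec \<in> measurable Q MM"
  unfolding measurable_pmf_measure1 using vec_sp by blast

lemma sets_PP[simp, measurable_cong]: "sets PP = sets MM"
  by (simp add: PP_def)

lemma space_PP[simp]: "space PP = space MM"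
  by (simp add: PP_def)

lemma prob_PP: "prob_space PP"
  unfolding PP_def by (rule prob_space.prob_space_distr[OF prob_space_measure_pmf vec_meas])


lemma integral_PP:
  assumes [measurable]: "f \<in> borel_measurable MM"
  shows "integral\<^sup>L PP f = (\<Sum>m<N. f (vec m)) / N"
  unfolding PP_def integral_distr[OF vec_meas assms] by (simp add: integral_pmf_of_set[OF ne])

lemma integrable_PP:
  assumes [measurable]: "f \<in> borel_measurable MM"
  shows "integrable PP (f :: _ \<Rightarrow> real)"
  unfolding PP_def
  by (subst integrable_distr_eq[OF vec_meas assms]) (auto intro!: integrable_measure_pmf_finite simp: set_pmf_of_set[OF ne])

lemma AE_PP_iff:
  assumes "{x \<in> space MM. P x} \<in> sets MM"
  shows "(AE x in PP. P x) \<longleftrightarrow> (\<forall>n<N. P (vec n))"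
  unfolding PP_def
  by (subst AE_distr_iff[OF vec_meas assms]) (auto simp: AE_measure_pmf_iff set_pmf_of_set[OF ne])

context
  fixes S :: "nat set"
  assumes S: "S \<subseteq> V" and finV: "finite V"
begin

abbreviation "MSS \<equiv> Pi\<^sub>M S (\<lambda>_. (borel :: real measure))"

lemma finS: "finite S" using S finV finite_subset by blast

lemma restr_meas[measurable]: "(\<lambda>x. restrict x S) \<in> measurable MM MSS"
  using measurable_restrict_subset[OF S] .

lemma restr_fun: "(\<lambda>x. restrict x S) \<in> space MM \<rightarrow> space MSS"
  using measurable_space[OF restr_meas] by blast

abbreviation "FF \<equiv> sigma_of PP S"

lemma sets_FF: "sets FF = {(\<lambda>x. restrict x S) -` D \<inter> space MM | D. D \<in> sets MSS}"
  unfolding sigma_of_def space_PP by (rule sets_vimage_algebra2[OF restr_fun])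

lemma subalg: "subalgebra PP FF"
  unfolding subalgebra_def
proof
  show "sets FF \<subseteq> sets PP"
    unfolding sets_FF sets_PP using restr_meas by (auto simp: measurable_sets)
  show "space FF = space PP" by (simp add: sigma_of_def)
qed

lemma sfs: "sigma_finite_subalgebra PP FF"
proof -
  interpret prob_space PP by (rule prob_PP)
  have "finite_measure_subalgebra PP FF"
    by unfold_locales (rule subalg)
  thus ?thesis by (rule finite_measure_subalgebra_is_sigma_finite)
qed


definition g' :: "((nat \<Rightarrow> real) \<Rightarrow> real) \<Rightarrow> (nat \<Rightarrow> real) \<Rightarrow> real" where
  "g' h y = (\<Sum>m<N. if restrict (vec m) S = y then h (vec m) else 0) /
            (\<Sum>m<N. if restrict (vec m) S = y then 1 else 0)"

definition gg :: "((nat \<Rightarrow> real) \<Rightarrow> real) \<Rightarrow> (nat \<Rightarrow> real) \<Rightarrow> real" where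
  "gg h x = g' h (restrict x S)"

lemma sing_c:
  assumes c: "c \<in> space MSS"
  shows "{c} \<in> sets MSS"
proof -
  have ce: "c \<in> extensional S" using c by (simp add: space_PiM PiE_iff)
  have "{c} = PiE S (\<lambda>i. {c i})" using PiE_singleton[OF ce] by simp
  also have "\<dots> \<in> sets MSS" using finS by (intro sets_PiM_I_finite) auto
  finally show ?thesis .
qed

lemma g'_meas: "g' h \<in> borel_measurable MSS"
proof -
  have c: "restrict (vec m) S \<in> space MSS" for m
    using restr_fun vec_sp by blast
  have sing: "{restrict (vec m) S} \<in> sets MSS" for m
    using sing_c[OF c[of m]] .
  have eq: "g' h = (\<lambda>y. (\<Sum>m<N. h (vec m) * indicator {restrict (vec m) S} y) / (\<Sum>m<N. indicator {restrict (vec m) S} y))"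
    unfolding g'_def by (intro ext arg_cong2[where f="(/)"] sum.cong refl) (auto simp: indicator_def)
  show ?thesis unfolding eq
    by (intro borel_measurable_divide borel_measurable_sum borel_measurable_times borel_measurable_const borel_measurable_indicator sing)
qed

lemma gg_measF: "gg h \<in> borel_measurable FF"
  unfolding gg_def sigma_of_def space_PP
  by (rule measurable_comp[OF measurable_vimage_algebra1[OF restr_fun] g'_meas, unfolded comp_def])

lemma gg_meas[measurable]: "gg h \<in> borel_measurable MM"
  using measurable_from_subalg[OF subalg gg_measF] by (simp add: measurable_def)

lemma sum_regroup:
  fixes d h :: "nat \<Rightarrow> real" and r :: "nat \<Rightarrow> nat \<Rightarrow> bool"
  assumes rr: "\<And>m. r m m" and sym: "\<And>m n. r m n \<Longrightarrow> r n m"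
    and dc: "\<And>m n. r m n \<Longrightarrow> d m = d n"
    and cc: "\<And>m n. r m n \<Longrightarrow> (\<Sum>l<N. if r l m then 1 else 0) = (\<Sum>l<N. if r l n then 1 else (0::real))"
  shows "(\<Sum>n<N. d n * ((\<Sum>m<N. if r m n then h m else 0) / (\<Sum>m<N. if r m n then 1 else 0)))
       = (\<Sum>m<N. d m * h m)"
proof -
  define c where "c n = (\<Sum>l<N. if r l n then 1 else (0::real))" for n
  have cpos: "c m > 0" if "m < N" for m
  proof -
    have "(\<Sum>l<N. if r l m then 1 else (0::real)) \<ge> (if r m m then 1 else 0)"
      using that by (intro member_le_sum) auto
    thus ?thesis using rr by (simp add: c_def)
  qed
  have "(\<Sum>n<N. d n * ((\<Sum>m<N. if r m n then h m else 0) / c n))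
      = (\<Sum>n<N. \<Sum>m<N. if r m n then d m * h m / c m else 0)"
  proof (rule sum.cong[OF refl])
    fix n assume "n \<in> {..<N}"
    have "d n * ((\<Sum>m<N. if r m n then h m else 0) / c n) = (\<Sum>m<N. (if r m n then d n * h m / c n else 0))"
      by (auto simp: sum_distrib_left sum_divide_distrib intro!: sum.cong)
    also have "\<dots> = (\<Sum>m<N. if r m n then d m * h m / c m else 0)"
      by (rule sum.cong[OF refl]) (auto simp: c_def dc cc)
    finally show "d n * ((\<Sum>m<N. if r m n then h m else 0) / c n) = \<dots>" .
  qed
  also have "\<dots> = (\<Sum>m<N. \<Sum>n<N. if r m n then d m * h m / c m else 0)"
    by (rule sum.swap)
  also have "\<dots> = (\<Sum>m<N. d m * h m / c m * c m)"
  proof (rule sum.cong[OF refl])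
    fix m assume "m \<in> {..<N}"
    have "(\<Sum>n<N. if r m n then d m * h m / c m else 0) = (\<Sum>n<N. d m * h m / c m * (if r n m then 1 else 0))"
      by (rule sum.cong[OF refl]) (auto dest: sym)
    thus "(\<Sum>n<N. if r m n then d m * h m / c m else 0) = d m * h m / c m * c m"
      by (simp add: c_def sum_distrib_left)
  qed
  also have "\<dots> = (\<Sum>m<N. d m * h m)"
  proof (rule sum.cong[OF refl])
    fix m assume "m \<in> {..<N}"
    hence "c m \<noteq> 0" using cpos by force
    thus "d m * h m / c m * c m = d m * h m" by simp
  qed
  finally show ?thesis by (simp add: c_def)
qed

lemma cond_exp_gg:
  assumes [measurable]: "h \<in> borel_measurable MM"
  shows "AE x in PP. real_cond_exp PP FF h x = gg h x"
proof -
  interpret sigma_finite_subalgebra PP FF by (rule sfs)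
  show ?thesis
  proof (rule real_cond_exp_charact)
    show "integrable PP h" by (rule integrable_PP) simp
    show "integrable PP (gg h)" by (rule integrable_PP) simp
    show "gg h \<in> borel_measurable FF" by (rule gg_measF)
    fix A assume "A \<in> sets FF"
    then obtain D where D: "D \<in> sets MSS" and A: "A = (\<lambda>x. restrict x S) -` D \<inter> space MM"
      unfolding sets_FF by blast
    have Am[measurable]: "A \<in> sets MM" using A D restr_meas by (auto simp: measurable_sets)
    have ind: "indicator A (vec m) = indicator D (restrict (vec m) S)" for m :: nat
      using vec_sp by (simp add: A indicator_def)
    have "(\<integral>x\<in>A. h x \<partial>PP) = (\<Sum>m<N. indicator D (restrict (vec m) S) * h (vec m)) / N"
      unfolding set_lebesgue_integral_def by (subst integral_PP) (auto simp: ind)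
    also have "\<dots> = (\<Sum>m<N. indicator D (restrict (vec m) S) * gg h (vec m)) / N"
      unfolding gg_def g'_def
      by (subst sum_regroup[symmetric, where r = "\<lambda>m n. restrict (vec m) S = restrict (vec n) S"]) auto
    also have "\<dots> = (\<integral>x\<in>A. gg h x \<partial>PP)"
      unfolding set_lebesgue_integral_def by (subst integral_PP) (auto simp: ind)
    finally show "(\<integral>x\<in>A. h x \<partial>PP) = (\<integral>x\<in>A. gg h x \<partial>PP)" .
  qed
qed


definition cn :: "(nat \<Rightarrow> bool) \<Rightarrow> nat \<Rightarrow> real" where
  "cn \<phi> n = (\<Sum>m<N. if restrict (vec m) S = restrict (vec n) S \<and> \<phi> m then 1 else 0)"

lemma gg_vec: "gg h (vec n) = (\<Sum>m<N. if restrict (vec m) S = restrict (vec n) S then h (vec m) else 0) / cn (\<lambda>_. True) n"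
  unfolding gg_def g'_def cn_def by simp

lemma cn_pos: "n < N \<Longrightarrow> cn (\<lambda>_. True) n > 0"
proof -
  assume n: "n < N"
  have "(\<Sum>m<N. if restrict (vec m) S = restrict (vec n) S \<and> True then 1 else (0::real)) \<ge>
        (if restrict (vec n) S = restrict (vec n) S \<and> True then 1 else 0)"
    using n by (intro member_le_sum) auto
  thus ?thesis by (simp add: cn_def)
qed

lemma ci_iff:
  assumes j: "j \<in> V" and k: "k \<in> V"
  shows "cond_indep PP j k S \<longleftrightarrow> (\<forall>A\<in>sets borel. \<forall>B\<in>sets borel. \<forall>n<N.
     cn (\<lambda>m. vec m j \<in> A \<and> vec m k \<in> B) n * cn (\<lambda>_. True) n = cn (\<lambda>m. vec m j \<in> A) n * cn (\<lambda>m. vec m k \<in> B) n)"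
proof -
  have cj[measurable]: "(\<lambda>y. y j) \<in> borel_measurable MM" using j by (rule measurable_component_singleton)
  have ck[measurable]: "(\<lambda>y. y k) \<in> borel_measurable MM" using k by (rule measurable_component_singleton)
  have one: "(AE x in PP. real_cond_exp PP FF (\<lambda>y. indicator A (y j) * indicator B (y k)) x =
                 real_cond_exp PP FF (\<lambda>y. indicator A (y j)) x * real_cond_exp PP FF (\<lambda>y. indicator B (y k)) x)
        \<longleftrightarrow> (\<forall>n<N. cn (\<lambda>m. vec m j \<in> A \<and> vec m k \<in> B) n * cn (\<lambda>_. True) n = cn (\<lambda>m. vec m j \<in> A) n * cn (\<lambda>m. vec m k \<in> B) n)"
    if A[measurable]: "A \<in> sets borel" and B[measurable]: "B \<in> sets borel" for A B :: "real set"
  proof -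
    define h1 where "h1 = (\<lambda>y::nat\<Rightarrow>real. indicator A (y j) :: real)"
    define h2 where "h2 = (\<lambda>y::nat\<Rightarrow>real. indicator B (y k) :: real)"
    define h12 where "h12 = (\<lambda>y::nat\<Rightarrow>real. indicator A (y j) * indicator B (y k) :: real)"
    have [measurable]: "h1 \<in> borel_measurable MM" "h2 \<in> borel_measurable MM" "h12 \<in> borel_measurable MM"
      unfolding h1_def h2_def h12_def by measurable
    have e: "AE x in PP. real_cond_exp PP FF h12 x = gg h12 x \<and> real_cond_exp PP FF h1 x = gg h1 x
                        \<and> real_cond_exp PP FF h2 x = gg h2 x"
      using cond_exp_gg[of h12] cond_exp_gg[of h1] cond_exp_gg[of h2] by simp
    have "(AE x in PP. real_cond_exp PP FF h12 x = real_cond_exp PP FF h1 x * real_cond_exp PP FF h2 x)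
        \<longleftrightarrow> (AE x in PP. gg h12 x = gg h1 x * gg h2 x)"
    proof
      assume "AE x in PP. real_cond_exp PP FF h12 x = real_cond_exp PP FF h1 x * real_cond_exp PP FF h2 x"
      thus "AE x in PP. gg h12 x = gg h1 x * gg h2 x" using e by eventually_elim simp
    next
      assume "AE x in PP. gg h12 x = gg h1 x * gg h2 x"
      thus "AE x in PP. real_cond_exp PP FF h12 x = real_cond_exp PP FF h1 x * real_cond_exp PP FF h2 x"
        using e by eventually_elim simp
    qed
    also have "\<dots> \<longleftrightarrow> (\<forall>n<N. gg h12 (vec n) = gg h1 (vec n) * gg h2 (vec n))"
      by (rule AE_PP_iff) measurable
    also have "\<dots> \<longleftrightarrow> (\<forall>n<N. cn (\<lambda>m. vec m j \<in> A \<and> vec m k \<in> B) n * cn (\<lambda>_. True) n = cn (\<lambda>m. vec m j \<in> A) n * cn (\<lambda>m. vec m k \<in> B) n)"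
    proof (intro all_cong1 imp_cong refl)
      fix n assume n: "n < N"
      have c: "cn (\<lambda>_. True) n > 0" using cn_pos[OF n] .
      have s: "(\<Sum>m<N. if restrict (vec m) S = restrict (vec n) S then h (vec m) else 0) = cn \<phi> n"
        if "\<And>m. h (vec m) = (if \<phi> m then 1 else 0)" for h \<phi>
        unfolding cn_def by (rule sum.cong) (auto simp: that)
      have s12: "(\<Sum>m<N. if restrict (vec m) S = restrict (vec n) S then h12 (vec m) else 0) = cn (\<lambda>m. vec m j \<in> A \<and> vec m k \<in> B) n"
        by (rule s) (simp add: h12_def indicator_def)
      have s1: "(\<Sum>m<N. if restrict (vec m) S = restrict (vec n) S then h1 (vec m) else 0) = cn (\<lambda>m. vec m j \<in> A) n"
        by (rule s) (simp add: h1_def indicator_def)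
      have s2: "(\<Sum>m<N. if restrict (vec m) S = restrict (vec n) S then h2 (vec m) else 0) = cn (\<lambda>m. vec m k \<in> B) n"
        by (rule s) (simp add: h2_def indicator_def)
      show "(gg h12 (vec n) = gg h1 (vec n) * gg h2 (vec n)) \<longleftrightarrow> (cn (\<lambda>m. vec m j \<in> A \<and> vec m k \<in> B) n * cn (\<lambda>_. True) n = cn (\<lambda>m. vec m j \<in> A) n * cn (\<lambda>m. vec m k \<in> B) n)"
        unfolding gg_vec s12 s1 s2 using c by (simp add: field_simps)
    qed
    finally show ?thesis unfolding h1_def h2_def h12_def .
  qed
  show ?thesis unfolding cond_indep_def using one by blast
qed

end

end



context dd
begin

lemma ci_tb:
  assumes tb: "\<And>m. vec m = restrict (\<lambda>i. if tb m i then 1 else 0) V"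
    and S: "S \<subseteq> V" and finV: "finite V" and j: "j \<in> V" and k: "k \<in> V"
  shows "cond_indep PP j k S \<longleftrightarrow> (\<forall>a0 a1 b0 b1. \<forall>n<N.
     (\<Sum>m<N. if (\<forall>i\<in>S. tb m i = tb n i) \<and> (if tb m j then a1 else a0) \<and> (if tb m k then b1 else b0) then 1 else 0) *
     (\<Sum>m<N. if (\<forall>i\<in>S. tb m i = tb n i) then 1 else (0::real)) =
     (\<Sum>m<N. if (\<forall>i\<in>S. tb m i = tb n i) \<and> (if tb m j then a1 else a0) then 1 else 0) *
     (\<Sum>m<N. if (\<forall>i\<in>S. tb m i = tb n i) \<and> (if tb m k then b1 else b0) then 1 else 0))"
proof -
  have re: "restrict (vec m) S = restrict (vec n) S \<longleftrightarrow> (\<forall>i\<in>S. tb m i = tb n i)" for m n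
    using S by (auto simp: tb fun_eq_iff restrict_def split: if_splits)
  have mem: "vec m i \<in> A \<longleftrightarrow> (if tb m i then 1 \<in> A else 0 \<in> A)" if "i \<in> V" for m i and A :: "real set"
    using that by (simp add: tb)
  define F where "F a0 a1 b0 b1 n \<longleftrightarrow>
     (\<Sum>m<N. if (\<forall>i\<in>S. tb m i = tb n i) \<and> (if tb m j then a1 else a0) \<and> (if tb m k then b1 else b0) then 1 else 0) *
     (\<Sum>m<N. if (\<forall>i\<in>S. tb m i = tb n i) then 1 else (0::real)) =
     (\<Sum>m<N. if (\<forall>i\<in>S. tb m i = tb n i) \<and> (if tb m j then a1 else a0) then 1 else 0) *
     (\<Sum>m<N. if (\<forall>i\<in>S. tb m i = tb n i) \<and> (if tb m k then b1 else b0) then 1 else 0)" for a0 a1 b0 b1 n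
  have cnF: "(cn S (\<lambda>m. vec m j \<in> A \<and> vec m k \<in> B) n * cn S (\<lambda>_. True) n = cn S (\<lambda>m. vec m j \<in> A) n * cn S (\<lambda>m. vec m k \<in> B) n)
      \<longleftrightarrow> F (0 \<in> A) (1 \<in> A) (0 \<in> B) (1 \<in> B) n" for A B :: "real set" and n
    unfolding cn_def[OF S finV] F_def re mem[OF j] mem[OF k] by (simp add: if_bool_eq_conj)
  define mk where "mk a0 a1 = (if a0 then {0} else {}) \<union> (if a1 then {1} else ({}::real set))" for a0 a1
  have mk: "mk a0 a1 \<in> sets borel" "0 \<in> mk a0 a1 \<longleftrightarrow> a0" "1 \<in> mk a0 a1 \<longleftrightarrow> a1" for a0 a1
    by (auto simp: mk_def)
  show ?thesis unfolding ci_iff[OF S finV j k] cnF F_def[symmetric]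
  proof
    assume a: "\<forall>A\<in>sets (borel :: real measure). \<forall>B\<in>sets (borel :: real measure). \<forall>n<N. F (0 \<in> A) (1 \<in> A) (0 \<in> B) (1 \<in> B) n"
    show "\<forall>a0 a1 b0 b1. \<forall>n<N. F a0 a1 b0 b1 n"
    proof (intro allI impI)
      fix a0 a1 b0 b1 n assume "n < N"
      have "\<forall>n<N. F (0 \<in> mk a0 a1) (1 \<in> mk a0 a1) (0 \<in> mk b0 b1) (1 \<in> mk b0 b1) n"
        using bspec[OF bspec[OF a mk(1)[of a0 a1]] mk(1)[of b0 b1]] .
      hence "F (0 \<in> mk a0 a1) (1 \<in> mk a0 a1) (0 \<in> mk b0 b1) (1 \<in> mk b0 b1) n" using \<open>n < N\<close> by blast
      thus "F a0 a1 b0 b1 n" by (simp only: mk)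
    qed
  qed auto
qed

end

definition EB :: "(nat \<times> nat) set" where "EB = {(1,4),(2,3),(3,4),(4,3)}"
definition EA :: "(nat \<times> nat) set" where "EA = {(1,4),(2,3),(3,4),(4,2)}"
definition tbB :: "nat \<Rightarrow> nat \<Rightarrow> bool" where
  "tbB m i \<longleftrightarrow> (m, i) \<in> {(2,2),(3,1),(3,4),(4,1),(4,3),(5,1),(5,2),(5,3),(5,4)}"
definition tbA :: "nat \<Rightarrow> nat \<Rightarrow> bool" where "tbA m i \<longleftrightarrow> m = 1"
definition vecB :: "nat \<Rightarrow> nat \<Rightarrow> real" where "vecB m = restrict (\<lambda>i. if tbB m i then 1 else 0) {1..4}"
definition vecA :: "nat \<Rightarrow> nat \<Rightarrow> real" where "vecA m = restrict (\<lambda>i. if tbA m i then 1 else 0) {1..4}"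

interpretation dB: dd "{1..4}" 6 vecB
  by unfold_locales (auto simp: vecB_def space_PiM)
interpretation dA: dd "{1..4}" 2 vecA
  by unfold_locales (auto simp: vecA_def space_PiM)

lemma sum6: "(\<Sum>m<(6::nat). f m) = f 0 + f 1 + f 2 + f 3 + f 4 + (f 5 :: real)"
  by (simp add: numeral_eq_Suc add.assoc)
lemma sum2: "(\<Sum>m<(2::nat). f m) = f 0 + (f 1 :: real)"
  by (simp add: numeral_eq_Suc)
lemma all6: "(\<forall>n<(6::nat). P n) \<longleftrightarrow> P 0 \<and> P 1 \<and> P 2 \<and> P 3 \<and> P 4 \<and> (P 5 :: bool)"
  by (simp add: numeral_eq_Suc All_less_Suc conj_ac)
lemma all2: "(\<forall>n<(2::nat). P n) \<longleftrightarrow> P 0 \<and> (P 1 :: bool)"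
  by (simp add: numeral_eq_Suc All_less_Suc conj_ac)
lemma mem14: "(1::nat) \<in> {1..4}" "(2::nat) \<in> {1..4}" "(3::nat) \<in> {1..4}" "(4::nat) \<in> {1..4}" by auto
lemma sub34: "{3,4} \<subseteq> {1..4::nat}" by auto

lemmas ciB = dB.ci_tb[OF vecB_def _ finite_atLeastAtMost]
lemmas ciA = dA.ci_tb[OF vecA_def _ finite_atLeastAtMost]

lemma depB:
  assumes "j \<in> {1..4}" "k \<in> {1..4}" "S \<subseteq> {1..4}" "n < 6"
  and "\<not> ((\<Sum>m<6. if (\<forall>i\<in>S. tbB m i = tbB n i) \<and> (if tbB m j then xb else xa) \<and> (if tbB m k then xd else xc) then 1 else 0) *
     (\<Sum>m<6. if (\<forall>i\<in>S. tbB m i = tbB n i) then 1 else (0::real)) =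
     (\<Sum>m<6. if (\<forall>i\<in>S. tbB m i = tbB n i) \<and> (if tbB m j then xb else xa) then 1 else 0) *
     (\<Sum>m<6. if (\<forall>i\<in>S. tbB m i = tbB n i) \<and> (if tbB m k then xd else xc) then 1 else 0))"
  shows "\<not> cond_indep dB.PP j k S"
  unfolding ciB[OF assms(3) assms(1) assms(2)] using assms(4,5) by blast

lemma depA:
  assumes "j \<in> {1..4}" "k \<in> {1..4}" "S \<subseteq> {1..4}" "n < 2"
  and "\<not> ((\<Sum>m<2. if (\<forall>i\<in>S. tbA m i = tbA n i) \<and> (if tbA m j then xb else xa) \<and> (if tbA m k then xd else xc) then 1 else 0) *
     (\<Sum>m<2. if (\<forall>i\<in>S. tbA m i = tbA n i) then 1 else (0::real)) =
     (\<Sum>m<2. if (\<forall>i\<in>S. tbA m i = tbA n i) \<and> (if tbA m j then xb else xa) then 1 else 0) *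
     (\<Sum>m<2. if (\<forall>i\<in>S. tbA m i = tbA n i) \<and> (if tbA m k then xd else xc) then 1 else 0))"
  shows "\<not> cond_indep dA.PP j k S"
  unfolding ciA[OF assms(3) assms(1) assms(2)] using assms(4,5) by blast

lemma dconnI:
  assumes "vs \<noteq> []" "hd vs = j" "last vs = k" "distinct vs" "length ds + 1 = length vs"
   "\<forall>i\<in>set [0..<length ds]. if ds ! i then (vs ! i, vs ! Suc i) \<in> E else (vs ! Suc i, vs ! i) \<in> E"
   "\<forall>i\<in>set [1..<length ds]. (vs ! i \<in> S \<longrightarrow> collider_at ds i) \<and> (collider_at ds i \<longrightarrow> (\<exists>s\<in>S. anc E (vs ! i) s))"
  shows "d_connected E j k S"
  unfolding d_connected_def is_path_def using assms by (intro exI[of _ vs] exI[of _ ds]) auto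

declare r_into_rtrancl[simp]

lemma ciB_12e: "cond_indep dB.PP 1 2 {}"
  unfolding ciB[OF empty_subsetI mem14(1) mem14(2)] all6
  apply (intro allI)
  apply (case_tac a0; case_tac a1; case_tac b0; case_tac b1)
  apply (simp_all add: sum6 tbB_def)
  done
lemma ciB_12_34: "cond_indep dB.PP 1 2 {3,4}"
  unfolding ciB[OF sub34 mem14(1) mem14(2)] all6
  apply (intro allI)
  apply (case_tac a0; case_tac a1; case_tac b0; case_tac b1)
  apply (simp_all add: sum6 tbB_def)
  done
lemma ciB_21e: "cond_indep dB.PP 2 1 {}"
  unfolding ciB[OF empty_subsetI mem14(2) mem14(1)] all6
  apply (intro allI)
  apply (case_tac a0; case_tac a1; case_tac b0; case_tac b1)
  apply (simp_all add: sum6 tbB_def)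
  done
lemma ciB_21_34: "cond_indep dB.PP 2 1 {3,4}"
  unfolding ciB[OF sub34 mem14(2) mem14(1)] all6
  apply (intro allI)
  apply (case_tac a0; case_tac a1; case_tac b0; case_tac b1)
  apply (simp_all add: sum6 tbB_def)
  done
lemma ciA_12_34: "cond_indep dA.PP 1 2 {3,4}"
  unfolding ciA[OF sub34 mem14(1) mem14(2)] all2
  apply (intro allI)
  apply (case_tac a0; case_tac a1; case_tac b0; case_tac b1)
  apply (auto simp: sum2 tbA_def)
  done
lemma ciA_21_34: "cond_indep dA.PP 2 1 {3,4}"
  unfolding ciA[OF sub34 mem14(2) mem14(1)] all2
  apply (intro allI)
  apply (case_tac a0; case_tac a1; case_tac b0; case_tac b1)
  apply (auto simp: sum2 tbA_def)
  done
lemma ndA_12e: "\<not> cond_indep dA.PP 1 2 {}"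
  by (rule depA[where xa=False and xb=True and xc=False and xd=True and n=0]) (simp_all add: sum2 tbA_def)

lemma dcB_1_2_3: "d_connected EB 1 2 {3}"
  by (rule dconnI[where vs="[1,4,3,2]" and ds="[True,True,False]"]) (simp_all add: EB_def collider_at_def anc_def)

lemma dcB_1_2_4: "d_connected EB 1 2 {4}"
  by (rule dconnI[where vs="[1,4,3,2]" and ds="[True,False,False]"]) (simp_all add: EB_def collider_at_def anc_def)

lemma dcB_1_3_e: "d_connected EB 1 3 {}"
  by (rule dconnI[where vs="[1,4,3]" and ds="[True,True]"]) (simp_all add: EB_def collider_at_def anc_def)

lemma dcB_1_3_2: "d_connected EB 1 3 {2}"
  by (rule dconnI[where vs="[1,4,3]" and ds="[True,True]"]) (simp_all add: EB_def collider_at_def anc_def)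

lemma dcB_1_3_4: "d_connected EB 1 3 {4}"
  by (rule dconnI[where vs="[1,4,3]" and ds="[True,False]"]) (simp_all add: EB_def collider_at_def anc_def)

lemma dcB_1_3_24: "d_connected EB 1 3 {2,4}"
  by (rule dconnI[where vs="[1,4,3]" and ds="[True,False]"]) (simp_all add: EB_def collider_at_def anc_def)

lemma dcB_1_4_e: "d_connected EB 1 4 {}"
  by (rule dconnI[where vs="[1,4]" and ds="[True]"]) (simp_all add: EB_def collider_at_def anc_def)

lemma dcB_1_4_2: "d_connected EB 1 4 {2}"
  by (rule dconnI[where vs="[1,4]" and ds="[True]"]) (simp_all add: EB_def collider_at_def anc_def)

lemma dcB_1_4_3: "d_connected EB 1 4 {3}"
  by (rule dconnI[where vs="[1,4]" and ds="[True]"]) (simp_all add: EB_def collider_at_def anc_def)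

lemma dcB_1_4_23: "d_connected EB 1 4 {2,3}"
  by (rule dconnI[where vs="[1,4]" and ds="[True]"]) (simp_all add: EB_def collider_at_def anc_def)

lemma dcB_2_1_3: "d_connected EB 2 1 {3}"
  by (rule dconnI[where vs="[2,3,4,1]" and ds="[True,False,False]"]) (simp_all add: EB_def collider_at_def anc_def)

lemma dcB_2_1_4: "d_connected EB 2 1 {4}"
  by (rule dconnI[where vs="[2,3,4,1]" and ds="[True,True,False]"]) (simp_all add: EB_def collider_at_def anc_def)

lemma dcB_2_3_e: "d_connected EB 2 3 {}"
  by (rule dconnI[where vs="[2,3]" and ds="[True]"]) (simp_all add: EB_def collider_at_def anc_def)

lemma dcB_2_3_1: "d_connected EB 2 3 {1}"
  by (rule dconnI[where vs="[2,3]" and ds="[True]"]) (simp_all add: EB_def collider_at_def anc_def)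

lemma dcB_2_3_4: "d_connected EB 2 3 {4}"
  by (rule dconnI[where vs="[2,3]" and ds="[True]"]) (simp_all add: EB_def collider_at_def anc_def)

lemma dcB_2_3_14: "d_connected EB 2 3 {1,4}"
  by (rule dconnI[where vs="[2,3]" and ds="[True]"]) (simp_all add: EB_def collider_at_def anc_def)

lemma dcB_2_4_e: "d_connected EB 2 4 {}"
  by (rule dconnI[where vs="[2,3,4]" and ds="[True,True]"]) (simp_all add: EB_def collider_at_def anc_def)

lemma dcB_2_4_1: "d_connected EB 2 4 {1}"
  by (rule dconnI[where vs="[2,3,4]" and ds="[True,True]"]) (simp_all add: EB_def collider_at_def anc_def)

lemma dcB_2_4_3: "d_connected EB 2 4 {3}"
  by (rule dconnI[where vs="[2,3,4]" and ds="[True,False]"]) (simp_all add: EB_def collider_at_def anc_def)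

lemma dcB_2_4_13: "d_connected EB 2 4 {1,3}"
  by (rule dconnI[where vs="[2,3,4]" and ds="[True,False]"]) (simp_all add: EB_def collider_at_def anc_def)

lemma dcB_3_1_e: "d_connected EB 3 1 {}"
  by (rule dconnI[where vs="[3,4,1]" and ds="[False,False]"]) (simp_all add: EB_def collider_at_def anc_def)

lemma dcB_3_1_2: "d_connected EB 3 1 {2}"
  by (rule dconnI[where vs="[3,4,1]" and ds="[False,False]"]) (simp_all add: EB_def collider_at_def anc_def)

lemma dcB_3_1_4: "d_connected EB 3 1 {4}"
  by (rule dconnI[where vs="[3,4,1]" and ds="[True,False]"]) (simp_all add: EB_def collider_at_def anc_def)

lemma dcB_3_1_24: "d_connected EB 3 1 {2,4}"
  by (rule dconnI[where vs="[3,4,1]" and ds="[True,False]"]) (simp_all add: EB_def collider_at_def anc_def)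

lemma dcB_3_2_e: "d_connected EB 3 2 {}"
  by (rule dconnI[where vs="[3,2]" and ds="[False]"]) (simp_all add: EB_def collider_at_def anc_def)

lemma dcB_3_2_1: "d_connected EB 3 2 {1}"
  by (rule dconnI[where vs="[3,2]" and ds="[False]"]) (simp_all add: EB_def collider_at_def anc_def)

lemma dcB_3_2_4: "d_connected EB 3 2 {4}"
  by (rule dconnI[where vs="[3,2]" and ds="[False]"]) (simp_all add: EB_def collider_at_def anc_def)

lemma dcB_3_2_14: "d_connected EB 3 2 {1,4}"
  by (rule dconnI[where vs="[3,2]" and ds="[False]"]) (simp_all add: EB_def collider_at_def anc_def)

lemma dcB_3_4_e: "d_connected EB 3 4 {}"
  by (rule dconnI[where vs="[3,4]" and ds="[True]"]) (simp_all add: EB_def collider_at_def anc_def)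

lemma dcB_3_4_1: "d_connected EB 3 4 {1}"
  by (rule dconnI[where vs="[3,4]" and ds="[True]"]) (simp_all add: EB_def collider_at_def anc_def)

lemma dcB_3_4_2: "d_connected EB 3 4 {2}"
  by (rule dconnI[where vs="[3,4]" and ds="[True]"]) (simp_all add: EB_def collider_at_def anc_def)

lemma dcB_3_4_12: "d_connected EB 3 4 {1,2}"
  by (rule dconnI[where vs="[3,4]" and ds="[True]"]) (simp_all add: EB_def collider_at_def anc_def)

lemma dcB_4_1_e: "d_connected EB 4 1 {}"
  by (rule dconnI[where vs="[4,1]" and ds="[False]"]) (simp_all add: EB_def collider_at_def anc_def)

lemma dcB_4_1_2: "d_connected EB 4 1 {2}"
  by (rule dconnI[where vs="[4,1]" and ds="[False]"]) (simp_all add: EB_def collider_at_def anc_def)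

lemma dcB_4_1_3: "d_connected EB 4 1 {3}"
  by (rule dconnI[where vs="[4,1]" and ds="[False]"]) (simp_all add: EB_def collider_at_def anc_def)

lemma dcB_4_1_23: "d_connected EB 4 1 {2,3}"
  by (rule dconnI[where vs="[4,1]" and ds="[False]"]) (simp_all add: EB_def collider_at_def anc_def)

lemma dcB_4_2_e: "d_connected EB 4 2 {}"
  by (rule dconnI[where vs="[4,3,2]" and ds="[False,False]"]) (simp_all add: EB_def collider_at_def anc_def)

lemma dcB_4_2_1: "d_connected EB 4 2 {1}"
  by (rule dconnI[where vs="[4,3,2]" and ds="[False,False]"]) (simp_all add: EB_def collider_at_def anc_def)

lemma dcB_4_2_3: "d_connected EB 4 2 {3}"
  by (rule dconnI[where vs="[4,3,2]" and ds="[True,False]"]) (simp_all add: EB_def collider_at_def anc_def)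

lemma dcB_4_2_13: "d_connected EB 4 2 {1,3}"
  by (rule dconnI[where vs="[4,3,2]" and ds="[True,False]"]) (simp_all add: EB_def collider_at_def anc_def)

lemma dcB_4_3_e: "d_connected EB 4 3 {}"
  by (rule dconnI[where vs="[4,3]" and ds="[True]"]) (simp_all add: EB_def collider_at_def anc_def)

lemma dcB_4_3_1: "d_connected EB 4 3 {1}"
  by (rule dconnI[where vs="[4,3]" and ds="[True]"]) (simp_all add: EB_def collider_at_def anc_def)

lemma dcB_4_3_2: "d_connected EB 4 3 {2}"
  by (rule dconnI[where vs="[4,3]" and ds="[True]"]) (simp_all add: EB_def collider_at_def anc_def)

lemma dcB_4_3_12: "d_connected EB 4 3 {1,2}"
  by (rule dconnI[where vs="[4,3]" and ds="[True]"]) (simp_all add: EB_def collider_at_def anc_def)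

lemma dcA_1_2_e: "d_connected EA 1 2 {}"
  by (rule dconnI[where vs="[1,4,2]" and ds="[True,True]"]) (simp_all add: EA_def collider_at_def anc_def)

lemma dcA_1_2_3: "d_connected EA 1 2 {3}"
  by (rule dconnI[where vs="[1,4,2]" and ds="[True,True]"]) (simp_all add: EA_def collider_at_def anc_def)

lemma dcA_1_2_4: "d_connected EA 1 2 {4}"
  by (rule dconnI[where vs="[1,4,3,2]" and ds="[True,False,False]"]) (simp_all add: EA_def collider_at_def anc_def)

lemma dcA_1_3_e: "d_connected EA 1 3 {}"
  by (rule dconnI[where vs="[1,4,2,3]" and ds="[True,True,True]"]) (simp_all add: EA_def collider_at_def anc_def)

lemma dcA_1_3_2: "d_connected EA 1 3 {2}"
  by (rule dconnI[where vs="[1,4,3]" and ds="[True,False]"]) (simp_all add: EA_def collider_at_def anc_def)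

lemma dcA_1_3_4: "d_connected EA 1 3 {4}"
  by (rule dconnI[where vs="[1,4,3]" and ds="[True,False]"]) (simp_all add: EA_def collider_at_def anc_def)

lemma dcA_1_3_24: "d_connected EA 1 3 {2,4}"
  by (rule dconnI[where vs="[1,4,3]" and ds="[True,False]"]) (simp_all add: EA_def collider_at_def anc_def)

lemma dcA_1_4_e: "d_connected EA 1 4 {}"
  by (rule dconnI[where vs="[1,4]" and ds="[True]"]) (simp_all add: EA_def collider_at_def anc_def)

lemma dcA_1_4_2: "d_connected EA 1 4 {2}"
  by (rule dconnI[where vs="[1,4]" and ds="[True]"]) (simp_all add: EA_def collider_at_def anc_def)

lemma dcA_1_4_3: "d_connected EA 1 4 {3}"
  by (rule dconnI[where vs="[1,4]" and ds="[True]"]) (simp_all add: EA_def collider_at_def anc_def)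

lemma dcA_1_4_23: "d_connected EA 1 4 {2,3}"
  by (rule dconnI[where vs="[1,4]" and ds="[True]"]) (simp_all add: EA_def collider_at_def anc_def)

lemma dcA_2_1_e: "d_connected EA 2 1 {}"
  by (rule dconnI[where vs="[2,4,1]" and ds="[False,False]"]) (simp_all add: EA_def collider_at_def anc_def)

lemma dcA_2_1_3: "d_connected EA 2 1 {3}"
  by (rule dconnI[where vs="[2,4,1]" and ds="[False,False]"]) (simp_all add: EA_def collider_at_def anc_def)

lemma dcA_2_1_4: "d_connected EA 2 1 {4}"
  by (rule dconnI[where vs="[2,3,4,1]" and ds="[True,True,False]"]) (simp_all add: EA_def collider_at_def anc_def)

lemma dcA_2_3_e: "d_connected EA 2 3 {}"
  by (rule dconnI[where vs="[2,3]" and ds="[True]"]) (simp_all add: EA_def collider_at_def anc_def)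

lemma dcA_2_3_1: "d_connected EA 2 3 {1}"
  by (rule dconnI[where vs="[2,3]" and ds="[True]"]) (simp_all add: EA_def collider_at_def anc_def)

lemma dcA_2_3_4: "d_connected EA 2 3 {4}"
  by (rule dconnI[where vs="[2,3]" and ds="[True]"]) (simp_all add: EA_def collider_at_def anc_def)

lemma dcA_2_3_14: "d_connected EA 2 3 {1,4}"
  by (rule dconnI[where vs="[2,3]" and ds="[True]"]) (simp_all add: EA_def collider_at_def anc_def)

lemma dcA_2_4_e: "d_connected EA 2 4 {}"
  by (rule dconnI[where vs="[2,4]" and ds="[False]"]) (simp_all add: EA_def collider_at_def anc_def)

lemma dcA_2_4_1: "d_connected EA 2 4 {1}"
  by (rule dconnI[where vs="[2,4]" and ds="[False]"]) (simp_all add: EA_def collider_at_def anc_def)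

lemma dcA_2_4_3: "d_connected EA 2 4 {3}"
  by (rule dconnI[where vs="[2,4]" and ds="[False]"]) (simp_all add: EA_def collider_at_def anc_def)

lemma dcA_2_4_13: "d_connected EA 2 4 {1,3}"
  by (rule dconnI[where vs="[2,4]" and ds="[False]"]) (simp_all add: EA_def collider_at_def anc_def)

lemma dcA_3_1_e: "d_connected EA 3 1 {}"
  by (rule dconnI[where vs="[3,2,4,1]" and ds="[False,False,False]"]) (simp_all add: EA_def collider_at_def anc_def)

lemma dcA_3_1_2: "d_connected EA 3 1 {2}"
  by (rule dconnI[where vs="[3,4,1]" and ds="[True,False]"]) (simp_all add: EA_def collider_at_def anc_def)

lemma dcA_3_1_4: "d_connected EA 3 1 {4}"
  by (rule dconnI[where vs="[3,4,1]" and ds="[True,False]"]) (simp_all add: EA_def collider_at_def anc_def)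

lemma dcA_3_1_24: "d_connected EA 3 1 {2,4}"
  by (rule dconnI[where vs="[3,4,1]" and ds="[True,False]"]) (simp_all add: EA_def collider_at_def anc_def)

lemma dcA_3_2_e: "d_connected EA 3 2 {}"
  by (rule dconnI[where vs="[3,2]" and ds="[False]"]) (simp_all add: EA_def collider_at_def anc_def)

lemma dcA_3_2_1: "d_connected EA 3 2 {1}"
  by (rule dconnI[where vs="[3,2]" and ds="[False]"]) (simp_all add: EA_def collider_at_def anc_def)

lemma dcA_3_2_4: "d_connected EA 3 2 {4}"
  by (rule dconnI[where vs="[3,2]" and ds="[False]"]) (simp_all add: EA_def collider_at_def anc_def)

lemma dcA_3_2_14: "d_connected EA 3 2 {1,4}"
  by (rule dconnI[where vs="[3,2]" and ds="[False]"]) (simp_all add: EA_def collider_at_def anc_def)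

lemma dcA_3_4_e: "d_connected EA 3 4 {}"
  by (rule dconnI[where vs="[3,4]" and ds="[True]"]) (simp_all add: EA_def collider_at_def anc_def)

lemma dcA_3_4_1: "d_connected EA 3 4 {1}"
  by (rule dconnI[where vs="[3,4]" and ds="[True]"]) (simp_all add: EA_def collider_at_def anc_def)

lemma dcA_3_4_2: "d_connected EA 3 4 {2}"
  by (rule dconnI[where vs="[3,4]" and ds="[True]"]) (simp_all add: EA_def collider_at_def anc_def)

lemma dcA_3_4_12: "d_connected EA 3 4 {1,2}"
  by (rule dconnI[where vs="[3,4]" and ds="[True]"]) (simp_all add: EA_def collider_at_def anc_def)

lemma dcA_4_1_e: "d_connected EA 4 1 {}"
  by (rule dconnI[where vs="[4,1]" and ds="[False]"]) (simp_all add: EA_def collider_at_def anc_def)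

lemma dcA_4_1_2: "d_connected EA 4 1 {2}"
  by (rule dconnI[where vs="[4,1]" and ds="[False]"]) (simp_all add: EA_def collider_at_def anc_def)

lemma dcA_4_1_3: "d_connected EA 4 1 {3}"
  by (rule dconnI[where vs="[4,1]" and ds="[False]"]) (simp_all add: EA_def collider_at_def anc_def)

lemma dcA_4_1_23: "d_connected EA 4 1 {2,3}"
  by (rule dconnI[where vs="[4,1]" and ds="[False]"]) (simp_all add: EA_def collider_at_def anc_def)

lemma dcA_4_2_e: "d_connected EA 4 2 {}"
  by (rule dconnI[where vs="[4,2]" and ds="[True]"]) (simp_all add: EA_def collider_at_def anc_def)

lemma dcA_4_2_1: "d_connected EA 4 2 {1}"
  by (rule dconnI[where vs="[4,2]" and ds="[True]"]) (simp_all add: EA_def collider_at_def anc_def)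

lemma dcA_4_2_3: "d_connected EA 4 2 {3}"
  by (rule dconnI[where vs="[4,2]" and ds="[True]"]) (simp_all add: EA_def collider_at_def anc_def)

lemma dcA_4_2_13: "d_connected EA 4 2 {1,3}"
  by (rule dconnI[where vs="[4,2]" and ds="[True]"]) (simp_all add: EA_def collider_at_def anc_def)

lemma dcA_4_3_e: "d_connected EA 4 3 {}"
  by (rule dconnI[where vs="[4,3]" and ds="[False]"]) (simp_all add: EA_def collider_at_def anc_def)

lemma dcA_4_3_1: "d_connected EA 4 3 {1}"
  by (rule dconnI[where vs="[4,3]" and ds="[False]"]) (simp_all add: EA_def collider_at_def anc_def)

lemma dcA_4_3_2: "d_connected EA 4 3 {2}"
  by (rule dconnI[where vs="[4,3]" and ds="[False]"]) (simp_all add: EA_def collider_at_def anc_def)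

lemma dcA_4_3_12: "d_connected EA 4 3 {1,2}"
  by (rule dconnI[where vs="[4,3]" and ds="[False]"]) (simp_all add: EA_def collider_at_def anc_def)

lemma ndB_1_2_3: "\<not> cond_indep dB.PP 1 2 {3}"
  by (rule depB[where xa=False and xb=True and xc=False and xd=True and n=0]) (simp_all add: sum6 tbB_def)

lemma ndB_1_2_4: "\<not> cond_indep dB.PP 1 2 {4}"
  by (rule depB[where xa=False and xb=True and xc=False and xd=True and n=0]) (simp_all add: sum6 tbB_def)

lemma ndB_1_3_e: "\<not> cond_indep dB.PP 1 3 {}"
  by (rule depB[where xa=False and xb=True and xc=False and xd=True and n=0]) (simp_all add: sum6 tbB_def)

lemma ndB_1_3_2: "\<not> cond_indep dB.PP 1 3 {2}"
  by (rule depB[where xa=False and xb=True and xc=False and xd=True and n=0]) (simp_all add: sum6 tbB_def)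

lemma ndB_1_3_4: "\<not> cond_indep dB.PP 1 3 {4}"
  by (rule depB[where xa=False and xb=True and xc=False and xd=True and n=0]) (simp_all add: sum6 tbB_def)

lemma ndB_1_3_24: "\<not> cond_indep dB.PP 1 3 {2,4}"
  by (rule depB[where xa=False and xb=True and xc=False and xd=True and n=0]) (simp_all add: sum6 tbB_def)

lemma ndB_1_4_e: "\<not> cond_indep dB.PP 1 4 {}"
  by (rule depB[where xa=False and xb=True and xc=False and xd=True and n=0]) (simp_all add: sum6 tbB_def)

lemma ndB_1_4_2: "\<not> cond_indep dB.PP 1 4 {2}"
  by (rule depB[where xa=False and xb=True and xc=False and xd=True and n=0]) (simp_all add: sum6 tbB_def)

lemma ndB_1_4_3: "\<not> cond_indep dB.PP 1 4 {3}"
  by (rule depB[where xa=False and xb=True and xc=False and xd=True and n=0]) (simp_all add: sum6 tbB_def)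

lemma ndB_1_4_23: "\<not> cond_indep dB.PP 1 4 {2,3}"
  by (rule depB[where xa=False and xb=True and xc=False and xd=True and n=0]) (simp_all add: sum6 tbB_def)

lemma ndB_2_1_3: "\<not> cond_indep dB.PP 2 1 {3}"
  by (rule depB[where xa=False and xb=True and xc=False and xd=True and n=0]) (simp_all add: sum6 tbB_def)

lemma ndB_2_1_4: "\<not> cond_indep dB.PP 2 1 {4}"
  by (rule depB[where xa=False and xb=True and xc=False and xd=True and n=0]) (simp_all add: sum6 tbB_def)

lemma ndB_2_3_e: "\<not> cond_indep dB.PP 2 3 {}"
  by (rule depB[where xa=False and xb=True and xc=False and xd=True and n=0]) (simp_all add: sum6 tbB_def)

lemma ndB_2_3_1: "\<not> cond_indep dB.PP 2 3 {1}"
  by (rule depB[where xa=False and xb=True and xc=False and xd=True and n=3]) (simp_all add: sum6 tbB_def)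

lemma ndB_2_3_4: "\<not> cond_indep dB.PP 2 3 {4}"
  by (rule depB[where xa=False and xb=True and xc=False and xd=True and n=0]) (simp_all add: sum6 tbB_def)

lemma ndB_2_3_14: "\<not> cond_indep dB.PP 2 3 {1,4}"
  by (rule depB[where xa=False and xb=True and xc=False and xd=True and n=3]) (simp_all add: sum6 tbB_def)

lemma ndB_2_4_e: "\<not> cond_indep dB.PP 2 4 {}"
  by (rule depB[where xa=False and xb=True and xc=False and xd=True and n=0]) (simp_all add: sum6 tbB_def)

lemma ndB_2_4_1: "\<not> cond_indep dB.PP 2 4 {1}"
  by (rule depB[where xa=False and xb=True and xc=False and xd=True and n=3]) (simp_all add: sum6 tbB_def)

lemma ndB_2_4_3: "\<not> cond_indep dB.PP 2 4 {3}"
  by (rule depB[where xa=False and xb=True and xc=False and xd=True and n=0]) (simp_all add: sum6 tbB_def)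

lemma ndB_2_4_13: "\<not> cond_indep dB.PP 2 4 {1,3}"
  by (rule depB[where xa=False and xb=True and xc=False and xd=True and n=4]) (simp_all add: sum6 tbB_def)

lemma ndB_3_1_e: "\<not> cond_indep dB.PP 3 1 {}"
  by (rule depB[where xa=False and xb=True and xc=False and xd=True and n=0]) (simp_all add: sum6 tbB_def)

lemma ndB_3_1_2: "\<not> cond_indep dB.PP 3 1 {2}"
  by (rule depB[where xa=False and xb=True and xc=False and xd=True and n=0]) (simp_all add: sum6 tbB_def)

lemma ndB_3_1_4: "\<not> cond_indep dB.PP 3 1 {4}"
  by (rule depB[where xa=False and xb=True and xc=False and xd=True and n=0]) (simp_all add: sum6 tbB_def)

lemma ndB_3_1_24: "\<not> cond_indep dB.PP 3 1 {2,4}"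
  by (rule depB[where xa=False and xb=True and xc=False and xd=True and n=0]) (simp_all add: sum6 tbB_def)

lemma ndB_3_2_e: "\<not> cond_indep dB.PP 3 2 {}"
  by (rule depB[where xa=False and xb=True and xc=False and xd=True and n=0]) (simp_all add: sum6 tbB_def)

lemma ndB_3_2_1: "\<not> cond_indep dB.PP 3 2 {1}"
  by (rule depB[where xa=False and xb=True and xc=False and xd=True and n=3]) (simp_all add: sum6 tbB_def)

lemma ndB_3_2_4: "\<not> cond_indep dB.PP 3 2 {4}"
  by (rule depB[where xa=False and xb=True and xc=False and xd=True and n=0]) (simp_all add: sum6 tbB_def)

lemma ndB_3_2_14: "\<not> cond_indep dB.PP 3 2 {1,4}"
  by (rule depB[where xa=False and xb=True and xc=False and xd=True and n=3]) (simp_all add: sum6 tbB_def)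

lemma ndB_3_4_e: "\<not> cond_indep dB.PP 3 4 {}"
  by (rule depB[where xa=False and xb=True and xc=False and xd=True and n=0]) (simp_all add: sum6 tbB_def)

lemma ndB_3_4_1: "\<not> cond_indep dB.PP 3 4 {1}"
  by (rule depB[where xa=False and xb=True and xc=False and xd=True and n=3]) (simp_all add: sum6 tbB_def)

lemma ndB_3_4_2: "\<not> cond_indep dB.PP 3 4 {2}"
  by (rule depB[where xa=False and xb=True and xc=False and xd=True and n=0]) (simp_all add: sum6 tbB_def)

lemma ndB_3_4_12: "\<not> cond_indep dB.PP 3 4 {1,2}"
  by (rule depB[where xa=False and xb=True and xc=False and xd=True and n=3]) (simp_all add: sum6 tbB_def)

lemma ndB_4_1_e: "\<not> cond_indep dB.PP 4 1 {}"
  by (rule depB[where xa=False and xb=True and xc=False and xd=True and n=0]) (simp_all add: sum6 tbB_def)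

lemma ndB_4_1_2: "\<not> cond_indep dB.PP 4 1 {2}"
  by (rule depB[where xa=False and xb=True and xc=False and xd=True and n=0]) (simp_all add: sum6 tbB_def)

lemma ndB_4_1_3: "\<not> cond_indep dB.PP 4 1 {3}"
  by (rule depB[where xa=False and xb=True and xc=False and xd=True and n=0]) (simp_all add: sum6 tbB_def)

lemma ndB_4_1_23: "\<not> cond_indep dB.PP 4 1 {2,3}"
  by (rule depB[where xa=False and xb=True and xc=False and xd=True and n=0]) (simp_all add: sum6 tbB_def)

lemma ndB_4_2_e: "\<not> cond_indep dB.PP 4 2 {}"
  by (rule depB[where xa=False and xb=True and xc=False and xd=True and n=0]) (simp_all add: sum6 tbB_def)

lemma ndB_4_2_1: "\<not> cond_indep dB.PP 4 2 {1}"
  by (rule depB[where xa=False and xb=True and xc=False and xd=True and n=3]) (simp_all add: sum6 tbB_def)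

lemma ndB_4_2_3: "\<not> cond_indep dB.PP 4 2 {3}"
  by (rule depB[where xa=False and xb=True and xc=False and xd=True and n=0]) (simp_all add: sum6 tbB_def)

lemma ndB_4_2_13: "\<not> cond_indep dB.PP 4 2 {1,3}"
  by (rule depB[where xa=False and xb=True and xc=False and xd=True and n=4]) (simp_all add: sum6 tbB_def)

lemma ndB_4_3_e: "\<not> cond_indep dB.PP 4 3 {}"
  by (rule depB[where xa=False and xb=True and xc=False and xd=True and n=0]) (simp_all add: sum6 tbB_def)

lemma ndB_4_3_1: "\<not> cond_indep dB.PP 4 3 {1}"
  by (rule depB[where xa=False and xb=True and xc=False and xd=True and n=3]) (simp_all add: sum6 tbB_def)

lemma ndB_4_3_2: "\<not> cond_indep dB.PP 4 3 {2}"
  by (rule depB[where xa=False and xb=True and xc=False and xd=True and n=0]) (simp_all add: sum6 tbB_def)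

lemma ndB_4_3_12: "\<not> cond_indep dB.PP 4 3 {1,2}"
  by (rule depB[where xa=False and xb=True and xc=False and xd=True and n=3]) (simp_all add: sum6 tbB_def)

lemmas dcB_all = dcB_1_2_3 dcB_1_2_4 dcB_1_3_e dcB_1_3_2 dcB_1_3_4 dcB_1_3_24 dcB_1_4_e dcB_1_4_2 dcB_1_4_3 dcB_1_4_23 dcB_2_1_3 dcB_2_1_4 dcB_2_3_e dcB_2_3_1 dcB_2_3_4 dcB_2_3_14 dcB_2_4_e dcB_2_4_1 dcB_2_4_3 dcB_2_4_13 dcB_3_1_e dcB_3_1_2 dcB_3_1_4 dcB_3_1_24 dcB_3_2_e dcB_3_2_1 dcB_3_2_4 dcB_3_2_14 dcB_3_4_e dcB_3_4_1 dcB_3_4_2 dcB_3_4_12 dcB_4_1_e dcB_4_1_2 dcB_4_1_3 dcB_4_1_23 dcB_4_2_e dcB_4_2_1 dcB_4_2_3 dcB_4_2_13 dcB_4_3_e dcB_4_3_1 dcB_4_3_2 dcB_4_3_12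

lemmas dcA_all = dcA_1_2_e dcA_1_2_3 dcA_1_2_4 dcA_1_3_e dcA_1_3_2 dcA_1_3_4 dcA_1_3_24 dcA_1_4_e dcA_1_4_2 dcA_1_4_3 dcA_1_4_23 dcA_2_1_e dcA_2_1_3 dcA_2_1_4 dcA_2_3_e dcA_2_3_1 dcA_2_3_4 dcA_2_3_14 dcA_2_4_e dcA_2_4_1 dcA_2_4_3 dcA_2_4_13 dcA_3_1_e dcA_3_1_2 dcA_3_1_4 dcA_3_1_24 dcA_3_2_e dcA_3_2_1 dcA_3_2_4 dcA_3_2_14 dcA_3_4_e dcA_3_4_1 dcA_3_4_2 dcA_3_4_12 dcA_4_1_e dcA_4_1_2 dcA_4_1_3 dcA_4_1_23 dcA_4_2_e dcA_4_2_1 dcA_4_2_3 dcA_4_2_13 dcA_4_3_e dcA_4_3_1 dcA_4_3_2 dcA_4_3_12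

lemmas ndB_all = ndB_1_2_3 ndB_1_2_4 ndB_1_3_e ndB_1_3_2 ndB_1_3_4 ndB_1_3_24 ndB_1_4_e ndB_1_4_2 ndB_1_4_3 ndB_1_4_23 ndB_2_1_3 ndB_2_1_4 ndB_2_3_e ndB_2_3_1 ndB_2_3_4 ndB_2_3_14 ndB_2_4_e ndB_2_4_1 ndB_2_4_3 ndB_2_4_13 ndB_3_1_e ndB_3_1_2 ndB_3_1_4 ndB_3_1_24 ndB_3_2_e ndB_3_2_1 ndB_3_2_4 ndB_3_2_14 ndB_3_4_e ndB_3_4_1 ndB_3_4_2 ndB_3_4_12 ndB_4_1_e ndB_4_1_2 ndB_4_1_3 ndB_4_1_23 ndB_4_2_e ndB_4_2_1 ndB_4_2_3 ndB_4_2_13 ndB_4_3_e ndB_4_3_1 ndB_4_3_2 ndB_4_3_12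


lemma triples4: "(j, k, S) \<in> triples 4 \<Longrightarrow> (j, k, S) \<in> {(1,2,{}), (1,2,{3}), (1,2,{4}), (1,2,{3,4}), (1,3,{}), (1,3,{2}), (1,3,{4}), (1,3,{2,4}), (1,4,{}), (1,4,{2}), (1,4,{3}), (1,4,{2,3}), (2,1,{}), (2,1,{3}), (2,1,{4}), (2,1,{3,4}), (2,3,{}), (2,3,{1}), (2,3,{4}), (2,3,{1,4}), (2,4,{}), (2,4,{1}), (2,4,{3}), (2,4,{1,3}), (3,1,{}), (3,1,{2}), (3,1,{4}), (3,1,{2,4}), (3,2,{}), (3,2,{1}), (3,2,{4}), (3,2,{1,4}), (3,4,{}), (3,4,{1}), (3,4,{2}), (3,4,{1,2}), (4,1,{}), (4,1,{2}), (4,1,{3}), (4,1,{2,3}), (4,2,{}), (4,2,{1}), (4,2,{3}), (4,2,{1,3}), (4,3,{}), (4,3,{1}), (4,3,{2}), (4,3,{1,2})}"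
proof -
  assume t: "(j, k, S) \<in> triples 4"
  have V: "{1..4::nat} = {1,2,3,4}" by auto
  have sub2: "S = {} \<or> S = {a} \<or> S = {b} \<or> S = {a,b}" if "S \<subseteq> {a,b}" for a b :: nat
    using that by (cases "a \<in> S"; cases "b \<in> S") auto
  have j: "j = 1 \<or> j = 2 \<or> j = 3 \<or> j = 4" and k: "k = 1 \<or> k = 2 \<or> k = 3 \<or> k = 4" and jk: "j \<noteq> k"
    and S: "S \<subseteq> {1,2,3,4} - {j, k}"
    using t by (auto simp: triples_def V)
  show ?thesis using j k jk S by (elim disjE) (auto dest!: sub2 simp: insert_Diff_if)
qed



lemma anc_no_in: "anc E v x \<Longrightarrow> (\<forall>y. (y, x) \<notin> E) \<Longrightarrow> v = x"
  unfolding anc_def by (erule rtranclE) auto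

lemma sepB_12e: "d_separated EB 1 2 {}"
proof -
  have "{v. anc EB v 1 \<or> anc EB v 2} - {1, 2} = {}"
    using anc_no_in[of EB _ 1] anc_no_in[of EB _ 2] by (auto simp: EB_def)
  moreover have "d_separated EB 1 2 ({v. anc EB v 1 \<or> anc EB v 2} - {1, 2})"
    by (rule sep_nonadj) (auto simp: EB_def really_adj_def virtually_adj_def)
  ultimately show ?thesis by (simp only:)
qed

lemma sepA_12_34: "d_separated EA 1 2 {3,4}"
proof -
  have "{v. anc EA v 1 \<or> anc EA v 2} - {1, 2} = {3, 4}"
  proof
    show "{v. anc EA v 1 \<or> anc EA v 2} - {1, 2} \<subseteq> {3, 4}"
    proof
      fix v assume v: "v \<in> {v. anc EA v 1 \<or> anc EA v 2} - {1, 2}"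
      hence "(v, 1) \<in> EA\<^sup>* \<or> (v, 2) \<in> EA\<^sup>*" "v \<noteq> 1" "v \<noteq> 2" by (auto simp: anc_def)
      hence "\<exists>w. (v, w) \<in> EA" by (meson converse_rtranclE)
      thus "v \<in> {3, 4}" using v by (auto simp: EA_def)
    qed
    have "(3, 4) \<in> EA" "(4, 2) \<in> EA" by (auto simp: EA_def)
    hence "(3, 2) \<in> EA\<^sup>*" "(4, 2) \<in> EA\<^sup>*" by (auto intro: rtrancl_into_rtrancl)
    thus "{3, 4} \<subseteq> {v. anc EA v 1 \<or> anc EA v 2} - {1, 2}" by (auto simp: anc_def)
  qed
  moreover have "d_separated EA 1 2 ({v. anc EA v 1 \<or> anc EA v 2} - {1, 2})"
    by (rule sep_nonadj) (auto simp: EA_def really_adj_def virtually_adj_def)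
  ultimately show ?thesis by (simp only:)
qed

lemma sepB_12_34: "d_separated EB 1 2 {3,4}"
  unfolding d_separated_def
proof
  assume "d_connected EB 1 2 {3,4}"
  then obtain vs ds where P: "is_path EB 1 2 vs ds" and C: "\<And>i. 0 < i \<Longrightarrow> i < length ds \<Longrightarrow>
           (vs ! i \<in> {3,4} \<longrightarrow> collider_at ds i) \<and>
           (collider_at ds i \<longrightarrow> (\<exists>s\<in>{3,4}. anc EB (vs ! i) s))"
    unfolding d_connected_def by blast
  have lv: "length vs = Suc (length ds)" using is_path_len[OF P] .
  have v0: "vs ! 0 = 1" using is_path_hd[OF P] .
  have vl: "vs ! length ds = 2" using is_path_last[OF P] .
  have dv: "distinct vs" using P by (simp add: is_path_def)
  have E: "\<And>i. i < length ds \<Longrightarrow> (if ds ! i then (vs ! i, vs ! Suc i) \<in> EB else (vs ! Suc i, vs ! i) \<in> EB)"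
    using P by (simp add: is_path_def)
  have n0: "0 < length ds" using v0 vl by (cases "length ds") auto
  have d0: "ds ! 0" and v1: "vs ! 1 = 4" using E[OF n0] v0 by (auto simp: EB_def split: if_splits)
  have n1: "1 < length ds"
  proof (rule ccontr)
    assume "\<not> 1 < length ds"
    hence "length ds = 1" using n0 by linarith
    hence "vs ! 1 = 2" using vl by simp
    thus False using v1 by simp
  qed
  have "collider_at ds 1" using C[OF _ n1] v1 by simp
  hence nd1: "\<not> ds ! 1" by (simp add: collider_at_def)
  hence "(vs ! 2, 4) \<in> EB" using E[OF n1] v1 by (simp add: numeral_2_eq_2)
  hence "vs ! 2 = 1 \<or> vs ! 2 = 3" by (auto simp: EB_def)
  moreover have "vs ! 2 \<noteq> vs ! 0" using nth_eq_iff_index_eq[OF dv, of 2 0] n1 lv by auto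
  ultimately have v2: "vs ! 2 = 3" using v0 by auto
  have n2: "2 < length ds"
  proof (rule ccontr)
    assume "\<not> 2 < length ds"
    hence "length ds = 2" using n1 by linarith
    hence "vs ! 2 = 2" using vl by simp
    thus False using v2 by simp
  qed
  have "collider_at ds 2" using C[OF _ n2] v2 by simp
  thus False using nd1 by (simp add: collider_at_def)
qed

lemmas sepB_21e = d_separated_sym[OF sepB_12e]
lemmas sepB_21_34 = d_separated_sym[OF sepB_12_34]
lemmas sepA_21_34 = d_separated_sym[OF sepA_12_34]

lemma dcgB: "dcg 4 EB" by (auto simp: dcg_def EB_def)
lemma dcgA: "dcg 4 EA" by (auto simp: dcg_def EA_def)

lemma distB: "distribution 4 dB.PP"
  unfolding distribution_def using dB.prob_PP dB.sets_PP by blast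
lemma distA: "distribution 4 dA.PP"
  unfolding distribution_def using dA.prob_PP dA.sets_PP by blast

lemma CFC_B: "CFC 4 EB dB.PP"
  unfolding CFC_def
proof (safe)
  fix j k S assume "(j, k, S) \<in> triples 4"
  from triples4[OF this, simplified insert_iff empty_iff prod.inject]
  show "d_separated EB j k S \<Longrightarrow> cond_indep dB.PP j k S"
    by (elim disjE conjE; simp only: d_separated_def dcB_all ciB_12e ciB_12_34 ciB_21e ciB_21_34 simp_thms)
next
  fix j k S assume "(j, k, S) \<in> triples 4"
  from triples4[OF this, simplified insert_iff empty_iff prod.inject]
  show "cond_indep dB.PP j k S \<Longrightarrow> d_separated EB j k S"
    by (elim disjE conjE; simp only: ndB_all sepB_12e sepB_12_34 sepB_21e sepB_21_34 simp_thms)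
qed

lemma DsepA_sub: "Dsep 4 EA \<subseteq> {(1,2,{3,4}), (2,1,{3,4})}"
proof
  fix x assume x: "x \<in> Dsep 4 EA"
  obtain j k S where xe: "x = (j, k, S)" by (cases x)
  have t: "(j, k, S) \<in> triples 4" and sp: "d_separated EA j k S" using x xe by (auto simp: Dsep_def)
  from triples4[OF t, simplified insert_iff empty_iff prod.inject]
  have "(j, k, S) \<in> {(1,2,{3,4}), (2,1,{3,4})}" using sp
    by (elim disjE conjE; simp only: d_separated_def dcA_all insert_iff prod.inject simp_thms)
  thus "x \<in> {(1,2,{3,4}), (2,1,{3,4})}" using xe by simp
qed

lemma T0_DsepB: "{(1,2,{3,4}), (2,1,{3,4})} \<subseteq> Dsep 4 EB"
  using sepB_12_34 sepB_21_34 by (auto simp: Dsep_def triples_def)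

lemma DsepA_B: "Dsep 4 EA \<subset> Dsep 4 EB"
proof -
  have "(1, 2, {}) \<in> Dsep 4 EB" using sepB_12e by (auto simp: Dsep_def triples_def)
  moreover have "(1, 2, {}) \<notin> Dsep 4 EA" using dcA_1_2_e by (auto simp: Dsep_def d_separated_def)
  ultimately show ?thesis using DsepA_sub T0_DsepB by blast
qed

lemma CMC_A_PA: "CMC 4 EA dA.PP"
  unfolding CMC_def using DsepA_sub ciA_12_34 ciA_21_34 by auto

lemma not_CMC_B_PA: "\<not> CMC 4 EB dA.PP"
proof -
  have "(1, 2, {}) \<in> Dsep 4 EB" using sepB_12e by (auto simp: Dsep_def triples_def)
  show ?thesis unfolding CMC_def
  proof
    assume a: "\<forall>(j, k, S)\<in>Dsep 4 EB. cond_indep dA.PP j k S"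
    show False using bspec[OF a \<open>(1, 2, {}) \<in> Dsep 4 EB\<close>] ndA_12e by simp
  qed
qed

lemma not_equiv_AB: "\<not> markov_equiv 4 EA EB"
  unfolding markov_equiv_def using distA CMC_A_PA not_CMC_B_PA by blast
lemma not_equiv_BA: "\<not> markov_equiv 4 EB EA"
  unfolding markov_equiv_def using distA CMC_A_PA not_CMC_B_PA by blast

lemma v14: "j \<in> {1..4::nat} \<Longrightarrow> j = 1 \<or> j = 2 \<or> j = 3 \<or> j = 4" by auto

lemma skelA_B: "card (skeleton EA) \<le> card (skeleton EB)"
proof -
  have n12: "(1::nat, 2::nat) \<notin> skeleton EA"
    by (simp add: skeleton_def really_adj_def virtually_adj_def EA_def)
  have "skeleton EA \<subseteq> {(1,3),(1,4),(2,3),(2,4),(3,4)}"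
  proof
    fix x assume x: "x \<in> skeleton EA"
    obtain j k where xe: "x = (j, k)" by (cases x)
    have jk: "j < k" using x xe by (simp add: skeleton_def)
    have jkV: "j \<in> {1..4}" "k \<in> {1..4}" using x xe skel_fin[OF dcgA] by auto
    have nx: "(j, k) \<noteq> (1, 2)" using x xe n12 by auto
    from v14[OF jkV(1)] v14[OF jkV(2)] show "x \<in> {(1,3),(1,4),(2,3),(2,4),(3,4)}"
      using jk nx xe by (elim disjE; simp)
  qed
  also have "\<dots> \<subseteq> skeleton EB"
  proof -
    have e: "(1,4) \<in> EB" "(2,3) \<in> EB" "(3,4) \<in> EB" "(4,3) \<in> EB" by (simp_all add: EB_def)
    have a43: "anc EB 4 3" and a34: "anc EB 3 4" using e by (simp_all add: anc_def r_into_rtrancl)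
    have v13: "virtually_adj EB 1 3" unfolding virtually_adj_def using e a43 by blast
    have v24: "virtually_adj EB 2 4" unfolding virtually_adj_def using e a34 by blast
    have r14: "really_adj EB 1 4" "really_adj EB 2 3" "really_adj EB 3 4"
      using e by (simp_all add: really_adj_def)
    show ?thesis using v13 v24 r14 unfolding skeleton_def by simp
  qed
  finally show ?thesis using skel_fin[OF dcgB] by (intro card_mono) (auto intro: finite_subset)
qed

lemma CFC_CMC: "CFC p E P \<Longrightarrow> CMC p E P"
  unfolding CFC_def CMC_def Dsep_def by auto

lemma CFC_Dsep: "CFC p E P \<Longrightarrow> CMC p G P \<Longrightarrow> Dsep p G \<subseteq> Dsep p E"
  unfolding CFC_def CMC_def Dsep_def by auto

theorem theorem3:
  shows "(\<forall>p E P. dcg p E \<and> distribution p P \<and> CFC p E P \<longrightarrow> weak_SMR p E P)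
       \<and> (\<exists>p E P. dcg p E \<and> distribution p P \<and> CFC p E P \<and> \<not> identifiable_SMR p E P)
       \<and> (\<forall>p E P. dcg p E \<and> distribution p P \<and> identifiable_SMR p E P \<longrightarrow> P_minimal p E P)
       \<and> (\<exists>p E P. dcg p E \<and> distribution p P \<and> weak_SMR p E P \<and> \<not> P_minimal p E P)"
proof (intro conjI)
  show "\<forall>p E P. dcg p E \<and> distribution p P \<and> CFC p E P \<longrightarrow> weak_SMR p E P"
    unfolding weak_SMR_def using CFC_CMC CFC_Dsep skel_card by blast
  show "\<exists>p E P. dcg p E \<and> distribution p P \<and> CFC p E P \<and> \<not> identifiable_SMR p E P"
  proof (intro exI conjI)
    show "\<not> identifiable_SMR 4 EB dB.PP"
      unfolding identifiable_SMR_def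
      using dcgA CFC_B not_equiv_AB skelA_B CMC_def CFC_Dsep[OF CFC_B] DsepA_B
      by (metis CFC_CMC CMC_def leD psubsetE subset_iff)
  qed (rule dcgB, rule distB, rule CFC_B)
  show "\<forall>p E P. dcg p E \<and> distribution p P \<and> identifiable_SMR p E P \<longrightarrow> P_minimal p E P"
  proof (intro allI impI)
    fix p E P assume a: "dcg p E \<and> distribution p P \<and> identifiable_SMR p E P"
    show "P_minimal p E P" unfolding P_minimal_def
    proof (intro conjI notI)
      show "CMC p E P" using a by (simp add: identifiable_SMR_def)
      assume "\<exists>G. dcg p G \<and> CMC p G P \<and> \<not> markov_equiv p G E \<and> Dsep p E \<subset> Dsep p G"
      then obtain G where G: "dcg p G" "CMC p G P" "\<not> markov_equiv p G E" "Dsep p E \<subset> Dsep p G" by blast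
      have "card (skeleton E) < card (skeleton G)" using a G unfolding identifiable_SMR_def by blast
      moreover have "card (skeleton G) \<le> card (skeleton E)" using skel_card[OF G(1)] a G(4) by blast
      ultimately show False by simp
    qed
  qed
  show "\<exists>p E P. dcg p E \<and> distribution p P \<and> weak_SMR p E P \<and> \<not> P_minimal p E P"
  proof (intro exI conjI)
    show "weak_SMR 4 EA dB.PP"
      unfolding weak_SMR_def
    proof (intro conjI allI impI)
      show "CMC 4 EA dB.PP" using CFC_CMC[OF CFC_B] DsepA_B unfolding CMC_def by blast
      fix G assume G: "dcg 4 G \<and> CMC 4 G dB.PP \<and> \<not> markov_equiv 4 G EA"
      have "card (skeleton EB) \<le> card (skeleton G)"
        using skel_card[OF dcgB] G CFC_Dsep[OF CFC_B] by blast
      thus "card (skeleton EA) \<le> card (skeleton G)" using skelA_B by simp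
    qed
    show "\<not> P_minimal 4 EA dB.PP"
      unfolding P_minimal_def using dcgB CFC_CMC[OF CFC_B] not_equiv_BA DsepA_B by blast
  qed (rule dcgA, rule distB)
qed

end
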